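(* Suppose each bidder $j$ additionally reports $d_j$, the smallest $d\in[n]$ such that $v_j$ is $d$-self-bounding, and let $d=\max_jd_j$. Define $\hat d_{-i}=\max_{j\ne i}d_j$, $\eta_i=4(\hat d_{-i}+1)$ and $x_i=\mathbb E_{r,\pi}[c_i]/\eta_i$. Then: (i) for every $i$, $x_i$ depends on bidder $i$'s report only through $v_i(\mathbf s)$ and is non-decreasing in it, so with payments $p_i=x_i(\mathbf s_{-i},\mathbf v_{-i},v_i(\mathbf s))v_i(\mathbf s)-\int_0^{v_i(\mathbf s)}x_i(\mathbf s_{-i},\mathbf v_{-i},t)dt$ the mechanism is EPIC-IR; (ii) $\sum_ix_i\le1$; (iii) for truthful reports, $\sum_ix_iv_i(\mathbf s)\ge\frac{\max_iv_i(\mathbf s)}{8(d+1)\ln2}$.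
   Context: Single-item auction, $n\ge2$ bidders, signals $s_i\in S_i\subseteq\mathbb R$, valuations $v_i:\mathbf S\to\mathbb R_{>0}$, $\mathbf S=S_1\times\cdots\times S_n$. Lower estimates $\underline v_j^{(i)}(\mathbf s)=\inf_{o_i\in S_i}v_j(o_i,\mathbf s_{-i})$. $v$ is $d$-self-bounding if $\sum_i(v(\mathbf s)-\inf_{o_i}v(o_i,\mathbf s_{-i}))\le d\,v(\mathbf s)$ for all $\mathbf s$ (every valuation is $n$-self-bounding). For $r\in[0,1)$, $w>0$: $f_r(w)=2^{r+k}$ for the integer $k$ with $2^{r+k}\le w<2^{r+k+1}$; $f_r(0)=0$. For a permutation $\pi$ of $[n]$, $a$ associated with bidder $i$ and $b$ with bidder $j$: $a>_\pi b$ iff $a>b$, or $a=b$ and $\pi(i)>\pi(j)$. $c_i(r,\pi)=1$ iff $f_r(v_i(\mathbf s))>_\pi f_r(\underline v_j^{(i)}(\mathbf s))$ for all $j\ne i$; $r\sim U[0,1)$ and $\pi$ uniform, independent. EPIC-IR: truthful reporting maximizes each bidder's utility $x_iv_i(\mathbf s)-p_i$ against any misreport $(s_i',v_i',d_i')$ given truthful others, and this utility is nonnegative. *)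

theory Defs
  imports "HOL-Analysis.Analysis" "HOL-Combinatorics.Permutations"
begin

text \<open>Bidders are indexed by 0..n-1. A signal profile is an element of
  PiE {..<n} S; a valuation profile is v :: nat => (nat => real) => real.\<close>

definition sprof :: "nat \<Rightarrow> (nat \<Rightarrow> real set) \<Rightarrow> (nat \<Rightarrow> real) set" where
  "sprof n S = PiE {..<n} S"

definition lowest :: "(nat \<Rightarrow> real set) \<Rightarrow> (nat \<Rightarrow> (nat \<Rightarrow> real) \<Rightarrow> real)
    \<Rightarrow> nat \<Rightarrow> nat \<Rightarrow> (nat \<Rightarrow> real) \<Rightarrow> real" where
  "lowest S v i j s = (INF x\<in>S i. v j (s(i := x)))"

definition self_bounding :: "nat \<Rightarrow> (nat \<Rightarrow> real set) \<Rightarrow> ((nat \<Rightarrow> real) \<Rightarrow> real) \<Rightarrow> nat \<Rightarrow> bool" where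
  "self_bounding n S w d \<longleftrightarrow>
     (\<forall>s\<in>sprof n S. (\<Sum>i<n. w s - (INF x\<in>S i. w (s(i := x)))) \<le> real d * w s)"

definition sb_degree :: "nat \<Rightarrow> (nat \<Rightarrow> real set) \<Rightarrow> ((nat \<Rightarrow> real) \<Rightarrow> real) \<Rightarrow> nat" where
  "sb_degree n S w = (LEAST d. d \<in> {1..n} \<and> self_bounding n S w d)"

definition fr :: "real \<Rightarrow> real \<Rightarrow> real" where
  "fr r w = (if w = 0 then 0 else
     2 powr (r + real_of_int (THE k::int. 2 powr (r + k) \<le> w \<and> w < 2 powr (r + k + 1))))"

definition gt_pi :: "(nat \<Rightarrow> nat) \<Rightarrow> real \<Rightarrow> nat \<Rightarrow> real \<Rightarrow> nat \<Rightarrow> bool" where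
  "gt_pi \<pi> a i b j \<longleftrightarrow> a > b \<or> (a = b \<and> \<pi> i > \<pi> j)"

text \<open>c_i(r,pi), with bidder i's value v_i(s) replaced by a bid t.\<close>
definition cbid :: "nat \<Rightarrow> (nat \<Rightarrow> real set) \<Rightarrow> (nat \<Rightarrow> (nat \<Rightarrow> real) \<Rightarrow> real)
    \<Rightarrow> (nat \<Rightarrow> real) \<Rightarrow> nat \<Rightarrow> real \<Rightarrow> real \<Rightarrow> (nat \<Rightarrow> nat) \<Rightarrow> bool" where
  "cbid n S v s i t r \<pi> \<longleftrightarrow>
     (\<forall>j<n. j \<noteq> i \<longrightarrow> gt_pi \<pi> (fr r t) i (fr r (lowest S v i j s)) j)"

text \<open>E_{r,pi}[c_i] with r ~ U[0,1) and pi uniform over permutations of {..<n}, independent.\<close>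
definition Ec :: "nat \<Rightarrow> (nat \<Rightarrow> real set) \<Rightarrow> (nat \<Rightarrow> (nat \<Rightarrow> real) \<Rightarrow> real)
    \<Rightarrow> (nat \<Rightarrow> real) \<Rightarrow> nat \<Rightarrow> real \<Rightarrow> real" where
  "Ec n S v s i t =
     (\<Sum>\<pi>\<in>{\<pi>. \<pi> permutes {..<n}}. measure lborel {r \<in> {0..<1}. cbid n S v s i t r \<pi>}) / fact n"

definition eta :: "nat \<Rightarrow> (nat \<Rightarrow> nat) \<Rightarrow> nat \<Rightarrow> real" where
  "eta n d i = 4 * (real (Max {d j | j. j < n \<and> j \<noteq> i}) + 1)"

definition xbid :: "nat \<Rightarrow> (nat \<Rightarrow> real set) \<Rightarrow> (nat \<Rightarrow> (nat \<Rightarrow> real) \<Rightarrow> real)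
    \<Rightarrow> (nat \<Rightarrow> nat) \<Rightarrow> (nat \<Rightarrow> real) \<Rightarrow> nat \<Rightarrow> real \<Rightarrow> real" where
  "xbid n S v d s i t = Ec n S v s i t / eta n d i"

definition alloc :: "nat \<Rightarrow> (nat \<Rightarrow> real set) \<Rightarrow> (nat \<Rightarrow> (nat \<Rightarrow> real) \<Rightarrow> real)
    \<Rightarrow> (nat \<Rightarrow> nat) \<Rightarrow> (nat \<Rightarrow> real) \<Rightarrow> nat \<Rightarrow> real" where
  "alloc n S v d s i = xbid n S v d s i (v i s)"

definition pay :: "nat \<Rightarrow> (nat \<Rightarrow> real set) \<Rightarrow> (nat \<Rightarrow> (nat \<Rightarrow> real) \<Rightarrow> real)
    \<Rightarrow> (nat \<Rightarrow> nat) \<Rightarrow> (nat \<Rightarrow> real) \<Rightarrow> nat \<Rightarrow> real" where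
  "pay n S v d s i = xbid n S v d s i (v i s) * v i s - integral {0..v i s} (xbid n S v d s i)"

definition valid_vals :: "nat \<Rightarrow> (nat \<Rightarrow> real set) \<Rightarrow> (nat \<Rightarrow> (nat \<Rightarrow> real) \<Rightarrow> real) \<Rightarrow> bool" where
  "valid_vals n S v \<longleftrightarrow> (\<forall>j<n. \<forall>s\<in>sprof n S. 0 < v j s)"

end

theory Submission
  imports Defs
begin


lemma fr_pos:
  assumes "w > 0"
  shows "fr r w = 2 powr (r + real_of_int \<lfloor>log 2 w - r\<rfloor>)"
proof -
  have "(THE k::int. 2 powr (r + k) \<le> w \<and> w < 2 powr (r + k + 1)) = \<lfloor>log 2 w - r\<rfloor>"
  proof (rule the_equality)
    show "2 powr (r + \<lfloor>log 2 w - r\<rfloor>) \<le> w \<and> w < 2 powr (r + \<lfloor>log 2 w - r\<rfloor> + 1)"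
      using assms by (simp add: le_log_iff[symmetric] log_less_iff[symmetric]) linarith
  next
    fix k :: int assume "2 powr (r + k) \<le> w \<and> w < 2 powr (r + k + 1)"
    then have "r + k \<le> log 2 w" "log 2 w < r + k + 1"
      using assms by (simp_all add: le_log_iff log_less_iff)
    then show "k = \<lfloor>log 2 w - r\<rfloor>" by linarith
  qed
  then show ?thesis using assms by (simp add: fr_def)
qed

lemma fr_zero[simp]: "fr r 0 = 0" by (simp add: fr_def)

lemma fr_gt0: "w > 0 \<Longrightarrow> fr r w > 0" by (simp add: fr_pos)

lemma fr_ge0: "w \<ge> 0 \<Longrightarrow> fr r w \<ge> 0"
  by (cases "w = 0") (auto simp: fr_pos)

lemma fr_le: assumes "w \<ge> 0" shows "fr r w \<le> w"
proof (cases "w = 0")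
  case False
  then have "w > 0" using assms by simp
  have "r + real_of_int \<lfloor>log 2 w - r\<rfloor> \<le> log 2 w" by linarith
  then show ?thesis using \<open>w>0\<close> by (simp add: fr_pos le_log_iff)
qed simp

lemma fr_mono: assumes "0 \<le> a" "a \<le> b" shows "fr r a \<le> fr r b"
proof (cases "a = 0")
  case True then show ?thesis using assms fr_ge0 by simp
next
  case False
  then have "a > 0" "b > 0" using assms by auto
  have "log 2 a \<le> log 2 b" using \<open>a>0\<close> assms by simp
  then have "\<lfloor>log 2 a - r\<rfloor> \<le> \<lfloor>log 2 b - r\<rfloor>" by (intro floor_mono) simp
  then show ?thesis using \<open>a>0\<close> \<open>b>0\<close> by (simp add: fr_pos)
qed

lemma fr_less_iff:
  assumes "a > 0" "b > 0"
  shows "fr r a < fr r b \<longleftrightarrow> \<lfloor>log 2 a - r\<rfloor> < \<lfloor>log 2 b - r\<rfloor>"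
  using assms by (simp add: fr_pos)

lemma fr_eq_iff:
  assumes "a > 0" "b > 0"
  shows "fr r a = fr r b \<longleftrightarrow> \<lfloor>log 2 a - r\<rfloor> = \<lfloor>log 2 b - r\<rfloor>"
  using fr_less_iff[OF assms, of r] fr_less_iff[OF assms(2,1), of r] by (metis linorder_neq_iff)

lemma fr_eq': "w \<ge> 0 \<Longrightarrow> fr r w = (if w = 0 then 0 else 2 powr (r + real_of_int \<lfloor>log 2 w - r\<rfloor>))"
  by (auto simp: fr_pos)

lemma fr_measurable[measurable]:
  assumes "w \<ge> 0"
  shows "(\<lambda>r. fr r w) \<in> borel_measurable borel"
proof -
  have m: "(\<lambda>r. real_of_int \<lfloor>log 2 w - r\<rfloor>) \<in> borel_measurable borel"
    using measurable_compose[OF _ borel_measurable_real_floor, of "\<lambda>r. log 2 w - r" borel]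
    by (simp add: o_def)
  show ?thesis
    unfolding fr_eq'[OF assms] using m by measurable
qed




lemma sets_fr_less[measurable]:
  assumes "0 \<le> a" "0 \<le> b"
  shows "{r \<in> {0..<1}. fr r a < fr r b} \<in> sets lborel"
proof -
  have "Measurable.pred borel (\<lambda>r. fr r a < fr r b)" using assms by measurable
  then show ?thesis by (simp add: pred_def Collect_conj_eq sets_lborel)
qed

lemma meas_sub01:
  fixes A :: "real set"
  assumes "A \<subseteq> {0..<1}" "A \<in> sets lborel"
  shows "measure lborel A \<le> 1"
proof -
  have "measure lborel A \<le> measure lborel {0..1::real}"
    apply (rule measure_mono_fmeasurable)
    using assms fmeasurable_cbox[of "0::real" 1] by auto
  then show ?thesis by simp
qed

lemma meas_floor_event:
  fixes \<alpha> \<beta> :: real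
  assumes "\<alpha> \<le> \<beta>" "\<beta> - \<alpha> < 1"
  shows "measure lborel {r \<in> {0..<1}. \<lfloor>\<alpha> - r\<rfloor> < \<lfloor>\<beta> - r\<rfloor>} \<le> \<beta> - \<alpha>"
proof -
  define \<delta> where "\<delta> = \<beta> - \<alpha>"
  define m where "m = \<lfloor>\<beta>\<rfloor>"
  define \<theta> where "\<theta> = \<beta> - m"
  have th: "0 \<le> \<theta>" "\<theta> < 1" unfolding \<theta>_def m_def by linarith+
  have d: "0 \<le> \<delta>" "\<delta> < 1" using assms unfolding \<delta>_def by auto
  define I1 where "I1 = {max 0 (\<theta>-\<delta>)..\<theta>}"
  define I2 where "I2 = {\<theta>-\<delta>+1..max (\<theta>-\<delta>+1) 1}"
  have sub: "{r \<in> {0..<1}. \<lfloor>\<alpha> - r\<rfloor> < \<lfloor>\<beta> - r\<rfloor>} \<subseteq> I1 \<union> I2"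
  proof
    fix r assume r: "r \<in> {r \<in> {0..<1}. \<lfloor>\<alpha> - r\<rfloor> < \<lfloor>\<beta> - r\<rfloor>}"
    then have r01: "0 \<le> r" "r < 1" and lt: "\<lfloor>\<alpha> - r\<rfloor> < \<lfloor>\<beta> - r\<rfloor>" by auto
    show "r \<in> I1 \<union> I2"
    proof (cases "r \<le> \<theta>")
      case True
      then have "\<lfloor>\<beta> - r\<rfloor> = m" unfolding \<theta>_def m_def using r01 th
        by (simp add: floor_eq_iff) (simp add: \<theta>_def m_def)
      with lt have "\<alpha> - r < m" by linarith
      then show ?thesis using True r01 unfolding I1_def \<theta>_def \<delta>_def by auto
    next
      case False
      then have "\<lfloor>\<beta> - r\<rfloor> = m - 1"
      proof -
        have "real_of_int m \<le> \<beta>" "\<beta> < real_of_int m + 1" unfolding m_def by linarith+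
        then show ?thesis using False r01 unfolding floor_eq_iff \<theta>_def by simp
      qed
      with lt have "\<alpha> - r < m - 1" by linarith
      then show ?thesis using False r01 unfolding I2_def \<theta>_def \<delta>_def by auto
    qed
  qed
  have "measure lborel {r \<in> {0..<1}. \<lfloor>\<alpha> - r\<rfloor> < \<lfloor>\<beta> - r\<rfloor>} \<le> measure lborel (I1 \<union> I2)"
  proof (rule measure_mono_fmeasurable[OF sub])
    have "Measurable.pred borel (\<lambda>r. \<lfloor>\<alpha> - r\<rfloor> < \<lfloor>\<beta> - r\<rfloor>)"
    proof -
      have "(\<lambda>r. real_of_int \<lfloor>\<alpha> - r\<rfloor>) \<in> borel_measurable borel"
        using measurable_compose[OF _ borel_measurable_real_floor, of "\<lambda>r. \<alpha> - r" borel]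
        by (simp add: o_def)
      moreover have "(\<lambda>r. real_of_int \<lfloor>\<beta> - r\<rfloor>) \<in> borel_measurable borel"
        using measurable_compose[OF _ borel_measurable_real_floor, of "\<lambda>r. \<beta> - r" borel]
        by (simp add: o_def)
      ultimately have "Measurable.pred borel (\<lambda>r. real_of_int \<lfloor>\<alpha> - r\<rfloor> < real_of_int \<lfloor>\<beta> - r\<rfloor>)"
        by measurable
      then show ?thesis by simp
    qed
    then show "{r \<in> {0..<1}. \<lfloor>\<alpha> - r\<rfloor> < \<lfloor>\<beta> - r\<rfloor>} \<in> sets lborel"
      by (simp add: pred_def Collect_conj_eq sets_lborel)
    show "I1 \<union> I2 \<in> fmeasurable lborel" unfolding I1_def I2_def
      by (intro fmeasurable.Un) (simp_all only: fmeasurable_cbox[of "_::real", unfolded cbox_interval])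
  qed
  also have "\<dots> \<le> measure lborel I1 + measure lborel I2"
    by (rule measure_Un_le) (simp_all add: I1_def I2_def)
  also have "\<dots> = (\<theta> - max 0 (\<theta>-\<delta>)) + (max (\<theta>-\<delta>+1) 1 - (\<theta>-\<delta>+1))"
    unfolding I1_def I2_def using th d by (subst measure_lborel_Icc, simp)+ simp
  also have "\<dots> = \<delta>" by (simp add: max_def)
  finally show ?thesis unfolding \<delta>_def .
qed

lemma ln_lower_lin:
  fixes y :: real assumes "1/2 \<le> y" "y \<le> 1"
  shows "- ln y \<le> 2 * ln 2 * (1 - y)"
proof -
  have c: "concave_on {1/2..1::real} ln"
    using ln_concave unfolding concave_on_def by (rule convex_on_subset) auto
  have "(ln 1 - ln (1/2)) / (1 - 1/2) * (y - 1/2) + ln (1/2) \<le> ln y"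
    using concave_onD_Icc'[OF c, of y] assms by simp
  then show ?thesis by (simp add: ln_div algebra_simps)
qed

lemma meas_event:
  assumes "0 \<le> a" "a \<le> b" "0 < b"
  shows "measure lborel {r \<in> {0..<1}. fr r a < fr r b} \<le> 2 * (b - a) / b"
proof (cases "2 * a \<le> b")
  case True
  have "measure lborel {r \<in> {0..<1}. fr r a < fr r b} \<le> 1"
    using assms by (intro meas_sub01) auto
  also have "1 \<le> 2 * (b - a) / b" using True assms by (simp add: field_simps)
  finally show ?thesis .
next
  case False
  then have a0: "a > 0" using assms by auto
  have eq: "{r \<in> {0..<1}. fr r a < fr r b} = {r \<in> {0..<1}. \<lfloor>log 2 a - r\<rfloor> < \<lfloor>log 2 b - r\<rfloor>}"
    using a0 assms by (simp add: fr_less_iff)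
  have l1: "log 2 a \<le> log 2 b" using a0 assms by simp
  have "log 2 b - log 2 a = log 2 (b/a)" using a0 assms by (simp add: log_divide)
  also have "\<dots> < 1" using False a0 assms by (simp add: log_less_iff field_simps)
  finally have l2: "log 2 b - log 2 a < 1" .
  have "measure lborel {r \<in> {0..<1}. fr r a < fr r b} \<le> log 2 b - log 2 a"
    unfolding eq by (rule meas_floor_event[OF l1 l2])
  also have "\<dots> = - ln (a/b) / ln 2" using a0 assms by (simp add: log_def ln_div diff_divide_distrib)
  also have "\<dots> \<le> 2 * ln 2 * (1 - a/b) / ln 2"
    using ln_lower_lin[of "a/b"] False a0 assms by (intro divide_right_mono) (auto simp: field_simps)
  also have "\<dots> = 2 * (b - a) / b" using assms by (simp add: field_simps)
  finally show ?thesis .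
qed




definition top2 :: "nat set \<Rightarrow> nat \<Rightarrow> nat \<Rightarrow> (nat \<Rightarrow> nat) \<Rightarrow> bool" where
  "top2 X a b \<pi> \<longleftrightarrow> (\<forall>x\<in>X-{a}. \<pi> x < \<pi> a) \<and> (\<forall>x\<in>X-{a,b}. \<pi> x < \<pi> b)"

abbreviation "Perms n \<equiv> {\<pi>. \<pi> permutes {..<n}}"

lemma top2_compose:
  assumes "\<tau> permutes X"
  shows "top2 X a b (\<pi> \<circ> \<tau>) \<longleftrightarrow> top2 X (\<tau> a) (\<tau> b) \<pi>"
proof -
  have bij: "bij_betw \<tau> X X" using assms by (rule permutes_imp_bij)
  have inj: "inj \<tau>" using assms by (rule permutes_inj)
  have img: "\<tau> ` (X - S) = X - \<tau> ` S" for S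
    using bij inj by (metis bij_betw_def image_set_diff)
  have A: "(\<forall>x\<in>X-S. P (\<tau> x)) \<longleftrightarrow> (\<forall>y\<in>X - \<tau> ` S. P y)" for S P
    using img[of S] by (metis image_eqI imageE)
  show ?thesis unfolding top2_def
    using A[of "{a}" "\<lambda>y. \<pi> y < \<pi> (\<tau> a)"] A[of "{a,b}" "\<lambda>y. \<pi> y < \<pi> (\<tau> b)"] by simp
qed

lemma card_top2_invariant:
  assumes X: "X \<subseteq> {..<n}" and \<tau>: "\<tau> permutes X"
  shows "card {\<pi> \<in> Perms n. top2 X (\<tau> a) (\<tau> b) \<pi>} = card {\<pi> \<in> Perms n. top2 X a b \<pi>}"
proof -
  have \<tau>n: "\<tau> permutes {..<n}" using \<tau> X by (rule permutes_subset)
  have "bij_betw (\<lambda>\<pi>. \<pi> \<circ> \<tau>) {\<pi> \<in> Perms n. top2 X (\<tau> a) (\<tau> b) \<pi>} {\<pi> \<in> Perms n. top2 X a b \<pi>}"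
  proof (rule bij_betwI[where g = "\<lambda>\<pi>. \<pi> \<circ> inv \<tau>"])
    show "(\<lambda>\<pi>. \<pi> \<circ> \<tau>) \<in> {\<pi> \<in> Perms n. top2 X (\<tau> a) (\<tau> b) \<pi>} \<rightarrow> {\<pi> \<in> Perms n. top2 X a b \<pi>}"
      using top2_compose[OF \<tau>] permutes_compose[OF \<tau>n] by auto
    show "(\<lambda>\<pi>. \<pi> \<circ> inv \<tau>) \<in> {\<pi> \<in> Perms n. top2 X a b \<pi>} \<rightarrow> {\<pi> \<in> Perms n. top2 X (\<tau> a) (\<tau> b) \<pi>}"
    proof
      fix \<pi> assume p: "\<pi> \<in> {\<pi> \<in> Perms n. top2 X a b \<pi>}"
      have "\<pi> \<circ> inv \<tau> \<circ> \<tau> = \<pi>" using permutes_inv_o(2)[OF \<tau>] by (simp add: comp_assoc)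
      then have "top2 X (\<tau> a) (\<tau> b) (\<pi> \<circ> inv \<tau>)" using p top2_compose[OF \<tau>, of a b "\<pi> \<circ> inv \<tau>"] by simp
      moreover have "\<pi> \<circ> inv \<tau> permutes {..<n}" using p permutes_compose[OF permutes_inv[OF \<tau>n]] by auto
      ultimately show "\<pi> \<circ> inv \<tau> \<in> {\<pi> \<in> Perms n. top2 X (\<tau> a) (\<tau> b) \<pi>}" by simp
    qed
    show "\<pi> \<circ> \<tau> \<circ> inv \<tau> = \<pi>" for \<pi> using permutes_inv_o(1)[OF \<tau>] by (simp add: comp_assoc)
    show "\<pi> \<circ> inv \<tau> \<circ> \<tau> = \<pi>" for \<pi> using permutes_inv_o(2)[OF \<tau>] by (simp add: comp_assoc)
  qed
  then show ?thesis by (rule bij_betw_same_card)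
qed

lemma exists_tau:
  assumes "a \<in> X" "b \<in> X" "a \<noteq> b" "a' \<in> X" "b' \<in> X" "a' \<noteq> b'"
  shows "\<exists>\<tau>. \<tau> permutes X \<and> \<tau> a' = a \<and> \<tau> b' = b"
proof -
  define t1 where "t1 = Transposition.transpose a a'"
  define t2 where "t2 = Transposition.transpose (t1 b') b"
  have t1a: "t1 a' = a" unfolding t1_def by simp
  have "t1 b' \<noteq> a" unfolding t1_def using assms by (auto simp: Transposition.transpose_def)
  have t1b: "t1 b' \<in> X" unfolding t1_def using assms by (auto simp: Transposition.transpose_def)
  have "t2 a = a" unfolding t2_def using \<open>t1 b' \<noteq> a\<close> assms by (auto simp: Transposition.transpose_def)
  moreover have "t2 (t1 b') = b" unfolding t2_def by simp
  moreover have "t2 \<circ> t1 permutes X" unfolding t2_def t1_def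
    using assms t1b[unfolded t1_def] by (intro permutes_compose permutes_swap_id) auto
  ultimately show ?thesis using t1a by (intro exI[of _ "t2 \<circ> t1"]) auto
qed

lemma card_top2_eq:
  assumes X: "X \<subseteq> {..<n}" and "a \<in> X" "b \<in> X" "a \<noteq> b" "a' \<in> X" "b' \<in> X" "a' \<noteq> b'"
  shows "card {\<pi> \<in> Perms n. top2 X a b \<pi>} = card {\<pi> \<in> Perms n. top2 X a' b' \<pi>}"
proof -
  obtain \<tau> where "\<tau> permutes X" "\<tau> a' = a" "\<tau> b' = b" using exists_tau[OF assms(2-)] by blast
  then show ?thesis using card_top2_invariant[OF X, of \<tau> a' b'] by simp
qed

lemma top2_unique:
  assumes "inj_on \<pi> X" "top2 X a b \<pi>" "top2 X a' b' \<pi>" "a \<in> X" "b \<in> X" "a \<noteq> b" "a' \<in> X" "b' \<in> X" "a' \<noteq> b'"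
  shows "a = a' \<and> b = b'"
proof -
  have "a = a'"
  proof (rule ccontr)
    assume "a \<noteq> a'"
    then have "\<pi> a' < \<pi> a" "\<pi> a < \<pi> a'" using assms unfolding top2_def by auto
    then show False by simp
  qed
  moreover have "b = b'"
  proof (rule ccontr)
    assume "b \<noteq> b'"
    then have "\<pi> b' < \<pi> b" "\<pi> b < \<pi> b'" using assms \<open>a = a'\<close> unfolding top2_def by auto
    then show False by simp
  qed
  ultimately show ?thesis ..
qed

lemma card_top2_bound:
  assumes X: "X \<subseteq> {..<n}" and ab: "a \<in> X" "b \<in> X" "a \<noteq> b"
  shows "real (card {\<pi> \<in> Perms n. top2 X a b \<pi>}) * (real (card X) * (real (card X) - 1)) \<le> fact n"
proof -
  define P where "P = {p \<in> X \<times> X. fst p \<noteq> snd p}"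
  define N where "N = card {\<pi> \<in> Perms n. top2 X a b \<pi>}"
  have finX: "finite X" using X finite_subset by blast
  have finP: "finite P" unfolding P_def using finX by auto
  have finPerm: "finite (Perms n)" by (rule finite_permutations) simp
  have cardP: "card P = card X * (card X - 1)"
  proof -
    have "P = X \<times> X - (\<lambda>x. (x,x)) ` X" unfolding P_def by auto
    then have "card P = card (X \<times> X) - card ((\<lambda>x. (x,x)) ` X)"
      using finX by (simp add: card_Diff_subset image_subset_iff)
    also have "card ((\<lambda>x. (x,x)) ` X) = card X" by (rule card_image) (auto simp: inj_on_def)
    finally show ?thesis by (simp add: card_cartesian_product diff_mult_distrib2)
  qed
  have eq: "card {\<pi> \<in> Perms n. top2 X (fst p) (snd p) \<pi>} = N" if "p \<in> P" for p
    unfolding N_def using that ab X unfolding P_def by (intro card_top2_eq) auto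
  have "real (card P) * N = (\<Sum>p\<in>P. real (card {\<pi> \<in> Perms n. top2 X (fst p) (snd p) \<pi>}))"
    using eq by simp
  also have "\<dots> = (\<Sum>p\<in>P. \<Sum>\<pi>\<in>Perms n. of_bool (top2 X (fst p) (snd p) \<pi>))"
    using finPerm by (simp add: sum_of_bool_eq Collect_conj_eq Int_commute)
  also have "\<dots> = (\<Sum>\<pi>\<in>Perms n. \<Sum>p\<in>P. of_bool (top2 X (fst p) (snd p) \<pi>))"
    by (rule sum.swap)
  also have "\<dots> \<le> (\<Sum>\<pi>\<in>Perms n. 1)"
  proof (rule sum_mono)
    fix \<pi> assume "\<pi> \<in> Perms n"
    then have inj: "inj_on \<pi> X" using permutes_inj by (auto intro: inj_on_subset)
    have "(\<Sum>p\<in>P. of_bool (top2 X (fst p) (snd p) \<pi>) :: real) = real (card (P \<inter> {p. top2 X (fst p) (snd p) \<pi>}))"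
      using finP by (simp add: sum_of_bool_eq)
    also have "card (P \<inter> {p. top2 X (fst p) (snd p) \<pi>}) \<le> 1"
    proof -
      have fin: "finite (P \<inter> {p. top2 X (fst p) (snd p) \<pi>})" using finP by simp
      have "\<forall>x\<in>P \<inter> {p. top2 X (fst p) (snd p) \<pi>}. \<forall>y\<in>P \<inter> {p. top2 X (fst p) (snd p) \<pi>}. x = y"
        using top2_unique[OF inj] unfolding P_def by (auto simp: prod_eq_iff)
      then show ?thesis using card_le_Suc0_iff_eq[OF fin] by simp
    qed
    finally show "(\<Sum>p\<in>P. of_bool (top2 X (fst p) (snd p) \<pi>)) \<le> (1::real)" by simp
  qed
  also have "\<dots> = fact n" using card_permutations[of "{..<n}" n] by simp
  finally show ?thesis using cardP finX ab unfolding N_def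
    by (simp add: of_nat_diff mult.commute card_gt_0_iff) (metis One_nat_def Suc_leI card_gt_0_iff empty_iff of_nat_1 of_nat_diff)
qed




definition older :: "(nat \<Rightarrow> real) \<Rightarrow> nat \<Rightarrow> nat \<Rightarrow> bool" where
  "older vv k j \<longleftrightarrow> vv k > vv j \<or> (vv k = vv j \<and> k < j)"

definition condc :: "nat \<Rightarrow> (nat \<Rightarrow> real) \<Rightarrow> (nat \<Rightarrow> nat) \<Rightarrow> nat \<Rightarrow> nat \<Rightarrow> bool" where
  "condc n vv \<pi> j i \<longleftrightarrow> \<pi> j > \<pi> i \<and> (\<forall>k<n. older vv k j \<and> k \<noteq> i \<longrightarrow> \<pi> k < \<pi> i)"

lemma older_trans: "older vv a b \<Longrightarrow> older vv b c \<Longrightarrow> older vv a c"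
  unfolding older_def by auto
lemma older_asym: "older vv a b \<Longrightarrow> \<not> older vv b a"
  unfolding older_def by auto
lemma older_irrefl: "\<not> older vv a a"
  unfolding older_def by auto

lemma exists_oldest:
  assumes "finite A" "A \<noteq> {}"
  shows "\<exists>q\<in>A. \<forall>k\<in>A. k \<noteq> q \<longrightarrow> older vv q k"
proof -
  define M where "M = Max (vv ` A)"
  define A' where "A' = {k\<in>A. vv k = M}"
  have "M \<in> vv ` A" unfolding M_def using assms by simp
  then have "A' \<noteq> {}" unfolding A'_def by auto
  moreover have "finite A'" unfolding A'_def using assms by simp
  ultimately have o: "Min A' \<in> A'" by simp
  have "older vv (Min A') k" if "k \<in> A" "k \<noteq> Min A'" for k
  proof -
    have "vv k \<le> M" unfolding M_def using that assms by simp
    show ?thesis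
    proof (cases "vv k = M")
      case True
      then have "k \<in> A'" using that unfolding A'_def by simp
      then have "Min A' \<le> k" using \<open>finite A'\<close> by simp
      then show ?thesis using that o True unfolding older_def A'_def by auto
    next
      case False
      then show ?thesis using \<open>vv k \<le> M\<close> o unfolding older_def A'_def by auto
    qed
  qed
  then show ?thesis using o unfolding A'_def by blast
qed

lemma sum_swap_offdiag:
  fixes n :: nat shows "(\<Sum>i<n. \<Sum>j\<in>{..<n}-{i}. f i j) = (\<Sum>j<n. \<Sum>i\<in>{..<n}-{j}. (f i j :: real))"
proof -
  have "(\<Sum>i<n. \<Sum>j\<in>{..<n}-{i}. f i j) = (\<Sum>i\<in>{..<n}. \<Sum>j\<in>{j\<in>{..<n}. i \<noteq> j}. f i j)"
    by (intro sum.cong) auto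
  also have "\<dots> = (\<Sum>j\<in>{..<n}. \<Sum>i\<in>{i\<in>{..<n}. i \<noteq> j}. f i j)"
    using sum.swap_restrict[of "{..<n}" "{..<n}" f "\<lambda>i j. i \<noteq> j"] by simp
  also have "\<dots> = (\<Sum>j<n. \<Sum>i\<in>{..<n}-{j}. f i j)"
    by (intro sum.cong) auto
  finally show ?thesis .
qed

lemma charging:
  fixes g :: "nat \<Rightarrow> real" and h :: "nat \<Rightarrow> nat \<Rightarrow> real" and vv :: "nat \<Rightarrow> real"
    and w u :: "nat \<Rightarrow> real"
  assumes gmono: "\<And>j k. j < n \<Longrightarrow> k < n \<Longrightarrow> vv j \<le> vv k \<Longrightarrow> g j \<le> g k"
    and hle: "\<And>j i. j < n \<Longrightarrow> i < n \<Longrightarrow> h j i \<le> g j"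
    and i0: "i0 < n" "\<And>k. k < n \<Longrightarrow> \<not> older vv k i0"
    and inj: "inj_on \<pi> {..<n}"
    and w0: "\<And>i. i < n \<Longrightarrow> 0 \<le> w i" and w8: "\<And>i. i < n \<Longrightarrow> w i \<le> 1/8"
    and wu: "\<And>i j. i < n \<Longrightarrow> j < n \<Longrightarrow> i \<noteq> j \<Longrightarrow> w i \<le> u j"
  defines "win \<equiv> \<lambda>i. \<forall>j<n. j \<noteq> i \<longrightarrow> g i > h j i \<or> (g i = h j i \<and> \<pi> i > \<pi> j)"
  shows "(\<Sum>i<n. of_bool (win i) * w i) \<le>
         1/8 + (\<Sum>j<n. \<Sum>i\<in>{..<n}-{j}. of_bool (h j i < g j \<and> (j = i0 \<or> condc n vv \<pi> j i)) * u j)"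
proof -
  have u0: "0 \<le> u j" if "j < n" "n \<ge> 2" for j
  proof -
    define i where "i = (if j = 0 then 1 else 0::nat)"
    have "i < n" "i \<noteq> j" using that unfolding i_def by auto
    then show ?thesis using wu[of i j] w0[of i] that by simp
  qed
  have vmax: "vv k \<le> vv i0" if "k < n" for k using i0(2)[OF that] unfolding older_def by auto
  define A where "A = (\<lambda>i. {k\<in>{..<n}. k \<noteq> i \<and> g k = g i \<and> \<pi> k > \<pi> i})"
  define T where "T = {i\<in>{..<n}. win i \<and> \<not> (i \<noteq> i0 \<and> h i0 i < g i0) \<and> A i = {}}"
  have gi_ge: "g i0 \<le> g i" if "i < n" "win i" "\<not> (i \<noteq> i0 \<and> h i0 i < g i0)" for i
  proof (cases "i = i0")
    case False
    then have "h i0 i \<ge> g i0" using that by auto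
    moreover have "g i \<ge> h i0 i" using that False i0 unfolding win_def by force
    ultimately show ?thesis by simp
  qed simp
  have T1: "card T \<le> 1"
  proof -
    have "x = y" if "x \<in> T" "y \<in> T" for x y
    proof (rule ccontr)
      assume ne: "x \<noteq> y"
      have xy: "x < n" "y < n" using that unfolding T_def by auto
      have "g x = g i0" "g y = g i0"
        using gi_ge[of x] gi_ge[of y] that gmono[OF xy(1) i0(1) vmax[OF xy(1)]]
          gmono[OF xy(2) i0(1) vmax[OF xy(2)]] unfolding T_def by auto
      moreover have "\<pi> x \<noteq> \<pi> y" using inj ne xy unfolding inj_on_def by auto
      ultimately show False using that ne xy unfolding T_def A_def
        by (cases "\<pi> x < \<pi> y") auto
    qed
    then show ?thesis using card_le_Suc0_iff_eq[of T] unfolding T_def by auto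
  qed
  have point: "of_bool (win i) * w i \<le> of_bool (i \<in> T) * (1/8)
      + (\<Sum>j\<in>{..<n}-{i}. of_bool (h j i < g j \<and> (j = i0 \<or> condc n vv \<pi> j i)) * u j)"
    if "i < n" "n \<ge> 2" for i
  proof -
    have S0: "0 \<le> (\<Sum>j\<in>{..<n}-{i}. of_bool (h j i < g j \<and> (j = i0 \<or> condc n vv \<pi> j i)) * u j)"
      using u0[OF _ that(2)] by (intro sum_nonneg) auto
    have charge: "\<exists>j\<in>{..<n}-{i}. h j i < g j \<and> (j = i0 \<or> condc n vv \<pi> j i)"
      if wi: "win i" and nT: "i \<notin> T"
    proof (cases "i \<noteq> i0 \<and> h i0 i < g i0")
      case True then show ?thesis using i0 by auto
    next
      case False
      then have Ane: "A i \<noteq> {}" using wi nT \<open>i < n\<close> unfolding T_def by auto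
      obtain q where oA: "q \<in> A i" and oold: "\<And>k. k \<in> A i \<Longrightarrow> k \<noteq> q \<Longrightarrow> older vv q k"
        using exists_oldest[of "A i" vv] Ane unfolding A_def by auto
      have q: "q < n" "q \<noteq> i" "g q = g i" "\<pi> q > \<pi> i" using oA unfolding A_def by auto
      have Eo: "h q i < g q" using wi q unfolding win_def by force
      have "q \<noteq> i0"
      proof
        assume "q = i0"
        then have "h i0 i < g i0" using Eo by simp
        then show False using False q \<open>q = i0\<close> by auto
      qed
      moreover have "condc n vv \<pi> q i"
        unfolding condc_def
      proof (intro conjI allI impI)
        show "\<pi> i < \<pi> q" by (rule q(4))
        fix k assume k: "k < n" "older vv k q \<and> k \<noteq> i"
        show "\<pi> k < \<pi> i"
        proof (rule ccontr)
          assume "\<not> \<pi> k < \<pi> i"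
          moreover have "\<pi> k \<noteq> \<pi> i" using inj k \<open>i < n\<close> unfolding inj_on_def by auto
          ultimately have pk: "\<pi> k > \<pi> i" by simp
          have "vv q \<le> vv k" using k unfolding older_def by auto
          then have "g q \<le> g k" using gmono[OF q(1) k(1)] by simp
          moreover have "g k \<le> g i0" using gmono[OF k(1) i0(1) vmax[OF k(1)]] .
          moreover have "g i0 \<le> g i" using gi_ge[OF \<open>i<n\<close> wi False] .
          ultimately have "g k = g i" using q by simp
          then have "k \<in> A i" using k pk unfolding A_def by simp
          moreover have "k \<noteq> q" using k older_irrefl by metis
          ultimately have "older vv q k" using oold by simp
          then show False using k older_asym by metis
        qed
      qed
      ultimately show ?thesis using q Eo by (intro bexI[of _ q]) auto
    qed
    show ?thesis
    proof (cases "win i")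
      case False then show ?thesis using S0 by simp
    next
      case True
      show ?thesis
      proof (cases "i \<in> T")
        case True
        then show ?thesis using S0 w8[OF \<open>i<n\<close>] \<open>win i\<close> by simp
      next
        case False
        then obtain j where j: "j \<in> {..<n}-{i}" "h j i < g j \<and> (j = i0 \<or> condc n vv \<pi> j i)"
          using charge \<open>win i\<close> by blast
        have "w i \<le> u j" using wu[of i j] j \<open>i<n\<close> by auto
        also have "u j = of_bool (h j i < g j \<and> (j = i0 \<or> condc n vv \<pi> j i)) * u j" using j by simp
        also have "\<dots> \<le> (\<Sum>j\<in>{..<n}-{i}. of_bool (h j i < g j \<and> (j = i0 \<or> condc n vv \<pi> j i)) * u j)"
          by (rule member_le_sum[OF j(1)]) (use u0[OF _ that(2)] in auto)
        finally show ?thesis using True False by simp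
      qed
    qed
  qed
  show ?thesis
  proof (cases "n \<ge> 2")
    case False
    then have "n = 0 \<or> n = 1" by auto
    then show ?thesis
    proof
      assume "n = 0" then show ?thesis by simp
    next
      assume n1: "n = 1"
      then have "(\<Sum>i<n. of_bool (win i) * w i) \<le> 1/8" using w0 w8 by simp
      moreover have "(\<Sum>j<n. \<Sum>i\<in>{..<n}-{j}. of_bool (h j i < g j \<and> (j = i0 \<or> condc n vv \<pi> j i)) * u j) = 0"
        using n1 by (simp add: lessThan_Suc)
      ultimately show ?thesis by simp
    qed
  next
    case True
    have "(\<Sum>i<n. of_bool (win i) * w i) \<le> (\<Sum>i<n. of_bool (i \<in> T) * (1/8)
      + (\<Sum>j\<in>{..<n}-{i}. of_bool (h j i < g j \<and> (j = i0 \<or> condc n vv \<pi> j i)) * u j))"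
      by (rule sum_mono) (use point True in auto)
    also have "\<dots> = (\<Sum>i<n. of_bool (i \<in> T)) * (1/8)
      + (\<Sum>i<n. \<Sum>j\<in>{..<n}-{i}. of_bool (h j i < g j \<and> (j = i0 \<or> condc n vv \<pi> j i)) * u j)"
      by (simp add: sum.distrib sum_distrib_right)
    also have "(\<Sum>i<n. of_bool (i \<in> T) :: real) = card T"
    proof -
      have "T \<subseteq> {..<n}" unfolding T_def by auto
      then have "{..<n} \<inter> {i. i \<in> T} = T" by auto
      then show ?thesis by (simp add: sum_of_bool_eq)
    qed
    also have "(\<Sum>i<n. \<Sum>j\<in>{..<n}-{i}. of_bool (h j i < g j \<and> (j = i0 \<or> condc n vv \<pi> j i)) * u j)
       = (\<Sum>j<n. \<Sum>i\<in>{..<n}-{j}. of_bool (h j i < g j \<and> (j = i0 \<or> condc n vv \<pi> j i)) * u j)"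
      by (rule sum_swap_offdiag)
    finally show ?thesis using T1 by simp
  qed
qed




lemma deriv_pow2:
  "((\<lambda>r. 2 powr (r + c) / ln 2) has_real_derivative 2 powr (x + c)) (at x)"
  by (auto intro!: derivative_eq_intros)

lemma fr_integral_lower:
  assumes V: "V > 0"
  shows "ennreal (V / (2 * ln 2)) \<le> (\<integral>\<^sup>+ r. ennreal (indicator {0..<1} r * fr r V) \<partial>lborel)"
proof -
  define \<beta> where "\<beta> = log 2 V"
  define m where "m = \<lfloor>\<beta>\<rfloor>"
  define \<theta> where "\<theta> = \<beta> - m"
  have th: "0 \<le> \<theta>" "\<theta> < 1" unfolding \<theta>_def m_def by linarith+
  define g1 where "g1 = (\<lambda>r. 2 powr (r + real_of_int m))"
  define g2 where "g2 = (\<lambda>r. 2 powr (r + (real_of_int m - 1)))"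
  define F1 where "F1 = (\<lambda>r. 2 powr (r + real_of_int m) / ln 2)"
  define F2 where "F2 = (\<lambda>r. 2 powr (r + (real_of_int m - 1)) / ln 2)"
  have I1: "(\<integral>\<^sup>+x\<in>{0..\<theta>}. ennreal (g1 x)\<partial>lborel) = ennreal (F1 \<theta> - F1 0)"
    unfolding g1_def F1_def by (rule nn_integral_FTC_Icc) (use th deriv_pow2 in auto)
  have I2: "(\<integral>\<^sup>+x\<in>{\<theta>..1}. ennreal (g2 x)\<partial>lborel) = ennreal (F2 1 - F2 \<theta>)"
    unfolding g2_def F2_def by (rule nn_integral_FTC_Icc) (use th deriv_pow2 in auto)
  have Vb: "2 powr \<beta> = V" unfolding \<beta>_def using V by simp
  have e1: "F1 \<theta> = V / ln 2" unfolding F1_def \<theta>_def using Vb by simp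
  have e2: "F2 \<theta> = V / (2 * ln 2)"
  proof -
    have "2 powr (\<theta> + (real_of_int m - 1)) = 2 powr \<beta> / 2"
      unfolding \<theta>_def by (simp add: powr_diff)
    then have "2 powr (\<theta> + (real_of_int m - 1)) = V / 2" using Vb by simp
    then show ?thesis unfolding F2_def by (metis divide_divide_eq_left)
  qed
  have e3: "F2 1 = F1 0" unfolding F1_def F2_def by simp
  have "F1 \<theta> - F1 0 + (F2 1 - F2 \<theta>) = V / (2 * ln 2)"
    using e1 e2 e3 by (simp add: field_simps)
  have pos1: "F1 0 \<le> F1 \<theta>" unfolding F1_def using th by (simp add: divide_right_mono)
  have pos2: "F2 \<theta> \<le> F2 1" unfolding F2_def using th by (simp add: divide_right_mono)
  have "ennreal (V / (2 * ln 2)) = ennreal (F1 \<theta> - F1 0) + ennreal (F2 1 - F2 \<theta>)"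
    using \<open>F1 \<theta> - F1 0 + (F2 1 - F2 \<theta>) = V / (2 * ln 2)\<close> pos1 pos2
    by (metis diff_ge_0_iff_ge ennreal_plus)
  also have "\<dots> = (\<integral>\<^sup>+x. ennreal (g1 x) * indicator {0..\<theta>} x + ennreal (g2 x) * indicator {\<theta>..1} x \<partial>lborel)"
    unfolding I1[symmetric] I2[symmetric]
    by (rule nn_integral_add[symmetric]) (auto simp: g1_def g2_def)
  also have "\<dots> \<le> (\<integral>\<^sup>+ r. ennreal (indicator {0..<1} r * fr r V) \<partial>lborel)"
  proof (rule nn_integral_mono_AE)
    have "AE x in lborel. x \<noteq> \<theta> \<and> x \<noteq> 1" using AE_lborel_singleton[of \<theta>] AE_lborel_singleton[of 1]
      by eventually_elim auto
    then show "AE x in lborel. ennreal (g1 x) * indicator {0..\<theta>} x + ennreal (g2 x) * indicator {\<theta>..1} x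
        \<le> ennreal (indicator {0..<1} x * fr x V)"
    proof eventually_elim
      case (elim x)
      show ?case
      proof (cases "0 \<le> x \<and> x < \<theta>")
        case True
        have "\<lfloor>log 2 V - x\<rfloor> = m"
        proof -
          have "real_of_int m \<le> \<beta>" "\<beta> < real_of_int m + 1" unfolding m_def by linarith+
          then show ?thesis using True th unfolding floor_eq_iff \<beta>_def[symmetric] \<theta>_def by simp
        qed
        then have "fr x V = g1 x" using V unfolding g1_def by (simp add: fr_pos)
        then show ?thesis using True th by (simp add: indicator_def)
      next
        case False
        show ?thesis
        proof (cases "\<theta> < x \<and> x < 1")
          case True
          have "\<lfloor>log 2 V - x\<rfloor> = m - 1"
          proof -
            have "real_of_int m \<le> \<beta>" "\<beta> < real_of_int m + 1" unfolding m_def by linarith+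
            then show ?thesis using True th unfolding floor_eq_iff \<beta>_def[symmetric] \<theta>_def by simp
          qed
          then have "fr x V = g2 x" using V unfolding g2_def by (simp add: fr_pos)
          then show ?thesis using True th by (simp add: indicator_def)
        next
          case False2: False
          have "x \<notin> {0..\<theta>}" using False elim by auto
          moreover have "x \<notin> {\<theta>..1}" using False2 elim by auto
          ultimately show ?thesis by simp
        qed
      qed
    qed
  qed
  finally show ?thesis .
qed




lemma sprof_upd: "s \<in> sprof n S \<Longrightarrow> i < n \<Longrightarrow> x \<in> S i \<Longrightarrow> s(i := x) \<in> sprof n S"
  unfolding sprof_def by (auto simp: PiE_iff extensional_def)

lemma sprof_mem: "s \<in> sprof n S \<Longrightarrow> i < n \<Longrightarrow> s i \<in> S i"
  unfolding sprof_def by auto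

lemma lowest_bounds:
  assumes v: "valid_vals n S v" and s: "s \<in> sprof n S" and ij: "i < n" "j < n"
  shows "0 \<le> lowest S v i j s" "lowest S v i j s \<le> v j s"
proof -
  have pos: "0 < v j (s(i := x))" if "x \<in> S i" for x
    using v sprof_upd[OF s ij(1) that] ij unfolding valid_vals_def by auto
  have ne: "S i \<noteq> {}" using sprof_mem[OF s ij(1)] by auto
  have bdd: "bdd_below ((\<lambda>x. v j (s(i := x))) ` S i)"
    using pos by (intro bdd_belowI[of _ 0]) (auto simp: less_imp_le)
  show "0 \<le> lowest S v i j s" unfolding lowest_def
    using pos ne by (intro cINF_greatest) (auto simp: less_imp_le)
  have "lowest S v i j s \<le> v j (s(i := s i))" unfolding lowest_def
    using bdd sprof_mem[OF s ij(1)] by (rule cINF_lower)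
  then show "lowest S v i j s \<le> v j s" by simp
qed

lemma sb_degree_props:
  assumes v: "valid_vals n S v" and j: "j < n"
  shows "1 \<le> sb_degree n S (v j)" "sb_degree n S (v j) \<le> n"
    "self_bounding n S (v j) (sb_degree n S (v j))"
proof -
  have n1: "1 \<le> n" using j by simp
  have "self_bounding n S (v j) n"
    unfolding self_bounding_def
  proof
    fix s assume s: "s \<in> sprof n S"
    have "(\<Sum>i<n. v j s - (INF x\<in>S i. v j (s(i := x)))) \<le> (\<Sum>i<n. v j s)"
    proof (rule sum_mono)
      fix i assume "i \<in> {..<n}"
      then have "0 \<le> lowest S v i j s" using lowest_bounds(1)[OF v s _ j] by simp
      then show "v j s - (INF x\<in>S i. v j (s(i := x))) \<le> v j s" unfolding lowest_def by simp
    qed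
    then show "(\<Sum>i<n. v j s - (INF x\<in>S i. v j (s(i := x)))) \<le> real n * v j s" by simp
  qed
  then have ex: "n \<in> {1..n} \<and> self_bounding n S (v j) n" using n1 by simp
  have "sb_degree n S (v j) \<in> {1..n} \<and> self_bounding n S (v j) (sb_degree n S (v j))"
    unfolding sb_degree_def by (rule LeastI[where P = "\<lambda>d. d \<in> {1..n} \<and> self_bounding n S (v j) d", OF ex])
  then show "1 \<le> sb_degree n S (v j)" "sb_degree n S (v j) \<le> n"
    "self_bounding n S (v j) (sb_degree n S (v j))" by auto
qed

lemma sb_sum:
  assumes v: "valid_vals n S v" and j: "j < n" and s: "s \<in> sprof n S"
  shows "(\<Sum>i<n. v j s - lowest S v i j s) \<le> real (sb_degree n S (v j)) * v j s"
  using sb_degree_props(3)[OF v j] s unfolding self_bounding_def lowest_def by blast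


lemma pred_fr_le: assumes "0 \<le> a" "0 \<le> b" shows "Measurable.pred borel (\<lambda>r. fr r a \<le> fr r b)"
  using assms by measurable
lemma pred_fr_less: assumes "0 \<le> a" "0 \<le> b" shows "Measurable.pred borel (\<lambda>r. fr r a < fr r b)"
  using assms by measurable

lemma sets_A:
  assumes "0 \<le> t" "\<And>j. j < n \<Longrightarrow> j \<noteq> i \<Longrightarrow> 0 \<le> lowest S v i j s"
  shows "{r \<in> {0..<1}. cbid n S v s i t r \<pi>} \<in> sets lborel"
proof -
  have "Measurable.pred borel (\<lambda>r. \<forall>j\<in>{j. j<n \<and> j\<noteq>i}. gt_pi \<pi> (fr r t) i (fr r (lowest S v i j s)) j)"
  proof (rule pred_intros_countable_bounded(3))
    fix j assume "j \<in> {j. j<n \<and> j\<noteq>i}"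
    then have "0 \<le> lowest S v i j s" using assms by auto
    then have m1: "Measurable.pred borel (\<lambda>r. fr r (lowest S v i j s) \<le> fr r t)"
      and m2: "Measurable.pred borel (\<lambda>r. fr r (lowest S v i j s) < fr r t)"
      using assms(1) pred_fr_le pred_fr_less by blast+
    have "(\<lambda>r. gt_pi \<pi> (fr r t) i (fr r (lowest S v i j s)) j) =
      (if \<pi> j < \<pi> i then (\<lambda>r. fr r (lowest S v i j s) \<le> fr r t) else (\<lambda>r. fr r (lowest S v i j s) < fr r t))"
      by (auto simp: gt_pi_def fun_eq_iff)
    then show "Measurable.pred borel (\<lambda>r. gt_pi \<pi> (fr r t) i (fr r (lowest S v i j s)) j)"
      using m1 m2 by simp
  qed
  moreover have "(\<lambda>r. cbid n S v s i t r \<pi>) = (\<lambda>r. \<forall>j\<in>{j. j<n \<and> j\<noteq>i}. gt_pi \<pi> (fr r t) i (fr r (lowest S v i j s)) j)"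
    unfolding cbid_def by (rule ext) blast
  ultimately have P: "Measurable.pred borel (\<lambda>r. cbid n S v s i t r \<pi>)" by (simp only:)
  have "{r \<in> {0..<1}. cbid n S v s i t r \<pi>} = {0..<1} \<inter> {r \<in> space borel. cbid n S v s i t r \<pi>}" by auto
  also have "\<dots> \<in> sets borel" using P unfolding pred_def by (intro sets.Int) auto
  finally show ?thesis by (simp only: sets_lborel)
qed


lemma fmeas01: "A \<subseteq> {0..<1::real} \<Longrightarrow> A \<in> sets lborel \<Longrightarrow> A \<in> fmeasurable lborel"
  by (rule fmeasurableI2[OF fmeasurable_cbox[of 0 1]]) (auto simp: cbox_interval)

lemma eta_pos: "0 < eta n d i" unfolding eta_def by (simp add: add_pos_nonneg)

lemma cbid_mono:
  assumes "0 \<le> t1" "t1 \<le> t2" "cbid n S v s i t1 r \<pi>"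
  shows "cbid n S v s i t2 r \<pi>"
proof -
  have "fr r t1 \<le> fr r t2" using assms fr_mono by simp
  then show ?thesis using assms(3) unfolding cbid_def gt_pi_def by force
qed

lemma xbid_mono:
  assumes v: "valid_vals n S v" and s: "s \<in> sprof n S" and i: "i < n"
  shows "mono_on {0..} (xbid n S v d s i)"
proof (rule mono_onI)
  fix t1 t2 :: real assume t: "t1 \<in> {0..}" "t2 \<in> {0..}" "t1 \<le> t2"
  have low: "\<And>j. j < n \<Longrightarrow> j \<noteq> i \<Longrightarrow> 0 \<le> lowest S v i j s" using lowest_bounds(1)[OF v s i] by simp
  have mA: "{r \<in> {0..<1}. cbid n S v s i t r \<pi>} \<in> sets lborel" if "0 \<le> t" for t \<pi>
    by (rule sets_A) (use low that in auto)
  have "measure lborel {r \<in> {0..<1}. cbid n S v s i t1 r \<pi>} \<le> measure lborel {r \<in> {0..<1}. cbid n S v s i t2 r \<pi>}" for \<pi>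
  proof (rule measure_mono_fmeasurable)
    show "{r \<in> {0..<1}. cbid n S v s i t1 r \<pi>} \<subseteq> {r \<in> {0..<1}. cbid n S v s i t2 r \<pi>}"
      using cbid_mono[of t1 t2] t by force
    show "{r \<in> {0..<1}. cbid n S v s i t1 r \<pi>} \<in> sets lborel" using mA t by simp
    show "{r \<in> {0..<1}. cbid n S v s i t2 r \<pi>} \<in> fmeasurable lborel"
      by (rule fmeas01) (use mA t in auto)
  qed
  then have "(\<Sum>\<pi>\<in>{\<pi>. \<pi> permutes {..<n}}. measure lborel {r \<in> {0..<1}. cbid n S v s i t1 r \<pi>})
     \<le> (\<Sum>\<pi>\<in>{\<pi>. \<pi> permutes {..<n}}. measure lborel {r \<in> {0..<1}. cbid n S v s i t2 r \<pi>})"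
    by (rule sum_mono)
  then have "Ec n S v s i t1 \<le> Ec n S v s i t2" unfolding Ec_def
    by (rule divide_right_mono) simp
  then show "xbid n S v d s i t1 \<le> xbid n S v d s i t2" unfolding xbid_def
    by (rule divide_right_mono[OF _ less_imp_le[OF eta_pos]])
qed

lemma Ec_nonneg: "0 \<le> Ec n S v s i t"
  unfolding Ec_def by (intro divide_nonneg_nonneg sum_nonneg) auto

lemma xbid_nonneg: "0 \<le> xbid n S v d s i t"
  unfolding xbid_def using Ec_nonneg eta_pos by (simp add: less_imp_le)


lemma myerson:
  fixes x :: "real \<Rightarrow> real"
  assumes mono: "mono_on {0..} x" and nn: "\<And>t. 0 \<le> x t" and u: "0 \<le> u" and b: "0 \<le> b"
  shows "x b * u - (x b * b - integral {0..b} x) \<le> x u * u - (x u * u - integral {0..u} x)"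
    and "0 \<le> x u * u - (x u * u - integral {0..u} x)"
proof -
  have int: "x integrable_on {p..q}" if "0 \<le> p" for p q
    by (rule integrable_on_mono_on) (use mono_on_subset[OF mono] that in auto)
  show "0 \<le> x u * u - (x u * u - integral {0..u} x)"
    using integral_nonneg[OF int[of 0 u]] nn by simp
  show "x b * u - (x b * b - integral {0..b} x) \<le> x u * u - (x u * u - integral {0..u} x)"
  proof (cases "b \<le> u")
    case True
    have c: "integral {0..b} x + integral {b..u} x = integral {0..u} x"
      using Henstock_Kurzweil_Integration.integral_combine[OF b True int[of 0 u]] by simp
    have "integral {b..u} (\<lambda>_. x b) \<le> integral {b..u} x"
      using int[of b u] b mono True by (intro integral_le) (auto intro: mono_onD)
    then have "x b * (u - b) \<le> integral {b..u} x" using True by (simp add: integral_const_real mult.commute)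
    then show ?thesis using c by (simp add: algebra_simps)
  next
    case False
    have c: "integral {0..u} x + integral {u..b} x = integral {0..b} x"
      using Henstock_Kurzweil_Integration.integral_combine[OF u _ int[of 0 b]] False by simp
    have "integral {u..b} x \<le> integral {u..b} (\<lambda>_. x b)"
      using int[of u b] u mono False by (intro integral_le) (auto intro: mono_onD)
    then have "integral {u..b} x \<le> x b * (b - u)" using False by (simp add: integral_const_real mult.commute)
    then show ?thesis using c by (simp add: algebra_simps)
  qed
qed




definition Aset where "Aset n S v s i \<pi> = {r \<in> {0..<1::real}. cbid n S v s i (v i s) r \<pi>}"
definition Eset where "Eset S v s j i = {r \<in> {0..<1::real}. fr r (lowest S v i j s) < fr r (v j s)}"
definition i0 where "i0 n (vv :: nat \<Rightarrow> real) = (SOME q. q < n \<and> (\<forall>k<n. \<not> older vv k q))"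
definition oc where "oc n (vv :: nat \<Rightarrow> real) j = card {k\<in>{..<n}. older vv k j}"

lemma i0_props:
  assumes "0 < n"
  shows "i0 n vv < n" "\<And>k. k < n \<Longrightarrow> \<not> older vv k (i0 n vv)"
proof -
  obtain q where q: "q \<in> {..<n}" "\<forall>k\<in>{..<n}. k \<noteq> q \<longrightarrow> older vv q k"
    using exists_oldest[of "{..<n}" vv] assms by auto
  have "q < n \<and> (\<forall>k<n. \<not> older vv k q)"
    using q older_asym older_irrefl by (metis lessThan_iff)
  then have "i0 n vv < n \<and> (\<forall>k<n. \<not> older vv k (i0 n vv))"
    unfolding i0_def by (rule someI)
  then show "i0 n vv < n" "\<And>k. k < n \<Longrightarrow> \<not> older vv k (i0 n vv)" by auto
qed

lemma older_total: "j \<noteq> k \<Longrightarrow> older vv j k \<or> older vv k j"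
  unfolding older_def by auto

lemma eta_ge:
  assumes "i < n" "j < n" "j \<noteq> i"
  shows "4 * (real (d j) + 1) \<le> eta n d i"
proof -
  have "d j \<le> Max {d j | j. j < n \<and> j \<noteq> i}"
    using assms by (intro Max_ge) auto
  then show ?thesis unfolding eta_def by simp
qed

lemma eta_le:
  assumes "i < n" "2 \<le> n"
  shows "eta n d i \<le> 4 * (real (Max {d j | j. j < n}) + 1)"
proof -
  have "Max {d j | j. j < n \<and> j \<noteq> i} \<le> Max {d j | j. j < n}"
  proof (rule Max_mono)
    define j where "j = (if i = 0 then 1 else 0::nat)"
    have j: "j < n" "j \<noteq> i" using assms unfolding j_def by auto
    then show "{d j | j. j < n \<and> j \<noteq> i} \<noteq> {}" by auto
  qed (auto simp: finite_image_set)
  then show ?thesis unfolding eta_def by simp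
qed

lemma eta_ge8:
  assumes "2 \<le> n" "i < n" "\<And>j. j < n \<Longrightarrow> 1 \<le> d j"
  shows "8 \<le> eta n d i"
proof -
  define j where "j = (if i = 0 then 1 else 0::nat)"
  have j: "j < n" "j \<noteq> i" using assms unfolding j_def by auto
  then show ?thesis using eta_ge[OF assms(2) j, of d] assms(3)[OF j(1)] by simp
qed

lemma int01:
  assumes "A \<subseteq> {0..<1::real}" "A \<in> sets lborel"
  shows "integrable lborel (indicator A :: real \<Rightarrow> real)"
proof -
  have "emeasure lborel A \<le> emeasure lborel {0..1::real}"
    using assms by (intro emeasure_mono) auto
  then have "emeasure lborel A < \<infinity>" by (simp add: le_less_trans)
  then show ?thesis using integrable_indicator_iff[of lborel A] assms by simp
qed


lemma integ_sum_ind: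
  assumes "finite I" "\<And>i. i \<in> I \<Longrightarrow> A i \<subseteq> {0..<1::real}" "\<And>i. i\<in>I \<Longrightarrow> A i \<in> sets lborel"
  shows "integrable lborel (\<lambda>r. \<Sum>i\<in>I. indicator (A i) r * c i)"
    and "(integral\<^sup>L lborel (\<lambda>r. \<Sum>i\<in>I. indicator (A i) r * c i)) = (\<Sum>i\<in>I. measure lborel (A i) * (c i :: real))"
proof -
  have int: "integrable lborel (\<lambda>r. indicator (A i) r * c i)" if "i \<in> I" for i
    using int01[OF assms(2,3)[OF that]] by (rule integrable_mult_left)
  then show "integrable lborel (\<lambda>r. \<Sum>i\<in>I. indicator (A i) r * c i)"
    by (rule Bochner_Integration.integrable_sum)
  have "(integral\<^sup>L lborel (\<lambda>r. \<Sum>i\<in>I. indicator (A i) r * c i)) = (\<Sum>i\<in>I. LINT r|lborel. indicator (A i) r * c i)"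
    by (rule Bochner_Integration.integral_sum) (use int in auto)
  also have "\<dots> = (\<Sum>i\<in>I. measure lborel (A i) * c i)"
    by (simp add: integral_mult_left_zero)
  finally show "(integral\<^sup>L lborel (\<lambda>r. \<Sum>i\<in>I. indicator (A i) r * c i)) = (\<Sum>i\<in>I. measure lborel (A i) * (c i :: real))" .
qed

lemma per_pi:
  assumes n2: "2 \<le> n" and v: "valid_vals n S v" and s: "s \<in> sprof n S" and \<pi>: "\<pi> permutes {..<n}"
  defines "d \<equiv> \<lambda>j. sb_degree n S (v j)" and "vv \<equiv> \<lambda>j. v j s"
  shows "(\<Sum>i<n. measure lborel (Aset n S v s i \<pi>) * (1 / eta n d i)) \<le> 1/8 +
     (\<Sum>j<n. \<Sum>i\<in>{..<n}-{j}. measure lborel (Eset S v s j i) *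
        (of_bool (j = i0 n vv \<or> condc n vv \<pi> j i) * (1/(4*(real (d j)+1)))))"
proof -
  define c where "c = (\<lambda>j i. of_bool (j = i0 n vv \<or> condc n vv \<pi> j i) * (1/(4*(real (d j)+1))) :: real)"
  have lowb: "0 \<le> lowest S v i j s" "lowest S v i j s \<le> vv j" if "i < n" "j < n" for i j
    using lowest_bounds[OF v s that] unfolding vv_def by auto
  have vpos: "0 < vv j" if "j < n" for j using v s that unfolding valid_vals_def vv_def by auto
  have mA: "Aset n S v s i \<pi> \<in> sets lborel" "Aset n S v s i \<pi> \<subseteq> {0..<1}" if "i < n" for i
  proof -
    show "Aset n S v s i \<pi> \<in> sets lborel" unfolding Aset_def
      by (rule sets_A) (use vpos[OF that] lowb that in \<open>auto simp: vv_def less_imp_le\<close>)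
    show "Aset n S v s i \<pi> \<subseteq> {0..<1}" unfolding Aset_def by auto
  qed
  have mE: "Eset S v s j i \<in> sets lborel" "Eset S v s j i \<subseteq> {0..<1}" if "i < n" "j < n" for i j
  proof -
    show "Eset S v s j i \<in> sets lborel" unfolding Eset_def
      by (rule sets_fr_less) (use vpos[OF that(2)] lowb[OF that] in \<open>auto simp: vv_def less_imp_le\<close>)
    show "Eset S v s j i \<subseteq> {0..<1}" unfolding Eset_def by auto
  qed
  have d1: "1 \<le> d j" if "j < n" for j using sb_degree_props(1)[OF v that] unfolding d_def .
  have n0: "0 < n" using n2 by simp
  have pw: "(\<Sum>i<n. indicator (Aset n S v s i \<pi>) r * (1 / eta n d i)) \<le>
      indicator {0..<1} r * (1/8) + (\<Sum>j<n. \<Sum>i\<in>{..<n}-{j}. indicator (Eset S v s j i) r * c j i)" for r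
  proof (cases "r \<in> {0..<1}")
    case False
    then have "indicator (Aset n S v s i \<pi>) r = (0::real)" "indicator (Eset S v s j i) r = (0::real)" for i j
      unfolding Aset_def Eset_def by auto
    then show ?thesis using False by simp
  next
    case True
    define g where "g = (\<lambda>i. fr r (vv i))"
    define h where "h = (\<lambda>j i. fr r (lowest S v i j s))"
    have ch: "(\<Sum>i<n. of_bool (\<forall>j<n. j \<noteq> i \<longrightarrow> g i > h j i \<or> (g i = h j i \<and> \<pi> i > \<pi> j)) * (1 / eta n d i)) \<le>
         1/8 + (\<Sum>j<n. \<Sum>i\<in>{..<n}-{j}. of_bool (h j i < g j \<and> (j = i0 n vv \<or> condc n vv \<pi> j i)) * (1/(4*(real (d j)+1))))"
    proof (rule charging)
      show "g j \<le> g k" if "j < n" "k < n" "vv j \<le> vv k" for j k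
        unfolding g_def using fr_mono vpos that by (simp add: less_imp_le)
      show "h j i \<le> g j" if "j < n" "i < n" for j i
        unfolding g_def h_def using fr_mono lowb that by simp
      show "i0 n vv < n" using i0_props(1)[OF n0] .
      show "\<not> older vv k (i0 n vv)" if "k < n" for k using i0_props(2)[OF n0 that] .
      show "inj_on \<pi> {..<n}" using \<pi> by (rule permutes_inj_on)
      show "0 \<le> 1 / eta n d i" for i using eta_pos[of n d i] by simp
      show "1 / eta n d i \<le> 1/8" if "i < n" for i
        using eta_ge8[OF n2 that, of d] d1 by (simp add: divide_le_eq)
      show "1 / eta n d i \<le> 1/(4*(real (d j)+1))" if "i < n" "j < n" "i \<noteq> j" for i j
        using eta_ge[OF that(1,2), of d] that d1[OF that(2)]
        by (intro divide_left_mono) auto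
    qed
    have eA: "indicator (Aset n S v s i \<pi>) r = (of_bool (\<forall>j<n. j \<noteq> i \<longrightarrow> g i > h j i \<or> (g i = h j i \<and> \<pi> i > \<pi> j)) :: real)" for i
      using True unfolding Aset_def cbid_def gt_pi_def g_def h_def vv_def by (simp add: indicator_def)
    have eE: "indicator (Eset S v s j i) r * c j i = of_bool (h j i < g j \<and> (j = i0 n vv \<or> condc n vv \<pi> j i)) * (1/(4*(real (d j)+1)))" for i j
      using True unfolding Eset_def c_def g_def h_def vv_def by (simp add: indicator_def)
    show ?thesis using ch True unfolding eA eE by simp
  qed
  have intL: "integrable lborel (\<lambda>r. \<Sum>i<n. indicator (Aset n S v s i \<pi>) r * (1 / eta n d i))"
    and eqL: "(integral\<^sup>L lborel (\<lambda>r. \<Sum>i<n. indicator (Aset n S v s i \<pi>) r * (1 / eta n d i))) =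
       (\<Sum>i<n. measure lborel (Aset n S v s i \<pi>) * (1 / eta n d i))"
    using integ_sum_ind[of "{..<n}" "\<lambda>i. Aset n S v s i \<pi>" "\<lambda>i. 1 / eta n d i"] mA by auto
  have intI: "integrable lborel (\<lambda>r. \<Sum>i\<in>{..<n}-{j}. indicator (Eset S v s j i) r * c j i)"
    and eqI: "(integral\<^sup>L lborel (\<lambda>r. \<Sum>i\<in>{..<n}-{j}. indicator (Eset S v s j i) r * c j i)) =
       (\<Sum>i\<in>{..<n}-{j}. measure lborel (Eset S v s j i) * c j i)" if "j < n" for j
    using integ_sum_ind[of "{..<n}-{j}" "\<lambda>i. Eset S v s j i" "\<lambda>i. c j i"] mE that by auto
  have intR2: "integrable lborel (\<lambda>r. \<Sum>j<n. \<Sum>i\<in>{..<n}-{j}. indicator (Eset S v s j i) r * c j i)"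
    by (rule Bochner_Integration.integrable_sum) (use intI in auto)
  have eqR2: "(integral\<^sup>L lborel (\<lambda>r. \<Sum>j<n. \<Sum>i\<in>{..<n}-{j}. indicator (Eset S v s j i) r * c j i)) =
     (\<Sum>j<n. \<Sum>i\<in>{..<n}-{j}. measure lborel (Eset S v s j i) * c j i)"
  proof -
    have "(integral\<^sup>L lborel (\<lambda>r. \<Sum>j<n. \<Sum>i\<in>{..<n}-{j}. indicator (Eset S v s j i) r * c j i)) =
       (\<Sum>j<n. integral\<^sup>L lborel (\<lambda>r. \<Sum>i\<in>{..<n}-{j}. indicator (Eset S v s j i) r * c j i))"
      by (rule Bochner_Integration.integral_sum) (use intI in auto)
    also have "\<dots> = (\<Sum>j<n. \<Sum>i\<in>{..<n}-{j}. measure lborel (Eset S v s j i) * c j i)"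
      by (rule sum.cong) (use eqI in auto)
    finally show ?thesis .
  qed
  have int01': "integrable lborel (\<lambda>r. indicator {0..<1::real} r * (1/8::real))"
    by (rule integrable_mult_left) (rule int01, auto)
  have "(\<Sum>i<n. measure lborel (Aset n S v s i \<pi>) * (1 / eta n d i)) =
      (integral\<^sup>L lborel (\<lambda>r. \<Sum>i<n. indicator (Aset n S v s i \<pi>) r * (1 / eta n d i)))" using eqL by simp
  also have "\<dots> \<le> (integral\<^sup>L lborel (\<lambda>r. indicator {0..<1} r * (1/8) + (\<Sum>j<n. \<Sum>i\<in>{..<n}-{j}. indicator (Eset S v s j i) r * c j i)))"
    by (rule Bochner_Integration.integral_mono) (use intL int01' intR2 pw in auto)
  also have "\<dots> = (integral\<^sup>L lborel (\<lambda>r. indicator {0..<1::real} r * (1/8::real))) + (integral\<^sup>L lborel (\<lambda>r. (\<Sum>j<n. \<Sum>i\<in>{..<n}-{j}. indicator (Eset S v s j i) r * c j i)))"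
    by (rule Bochner_Integration.integral_add[OF int01' intR2])
  also have "(integral\<^sup>L lborel (\<lambda>r. indicator {0..<1::real} r * (1/8::real))) = 1/8"
    by (simp add: integral_mult_left_zero)
  finally have X: "(\<Sum>i<n. measure lborel (Aset n S v s i \<pi>) * (1 / eta n d i)) \<le> 1/8 + (\<Sum>j<n. \<Sum>i\<in>{..<n}-{j}. measure lborel (Eset S v s j i) * c j i)"
    unfolding eqR2 .
  then show ?thesis unfolding c_def .
qed




lemma count_condc:
  assumes "j < n" "i < n" "i \<noteq> j"
  shows "real (card {\<pi> \<in> Perms n. condc n vv \<pi> j i}) \<le>
    fact n / ((real (oc n vv j) + 2 - of_bool (older vv i j)) * (real (oc n vv j) + 1 - of_bool (older vv i j)))"
proof -
  define K where "K = {k \<in> {..<n}. older vv k j \<and> k \<noteq> i}"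
  define X where "X = insert j (insert i K)"
  have X: "X \<subseteq> {..<n}" unfolding X_def K_def using assms by auto
  have jK: "j \<notin> K" unfolding K_def by (simp add: older_irrefl)
  have iK: "i \<notin> K" unfolding K_def by auto
  have finK: "finite K" unfolding K_def by simp
  have cX: "card X = card K + 2" unfolding X_def using jK iK finK assms by simp
  have cK: "real (card K) = real (oc n vv j) - of_bool (older vv i j)"
  proof -
    have "K = {k \<in> {..<n}. older vv k j} - {i}" unfolding K_def by auto
    then have "card K = oc n vv j - (if i \<in> {k \<in> {..<n}. older vv k j} then 1 else 0)"
      unfolding oc_def by (simp add: card_Diff_singleton_if)
    moreover have o1: "1 \<le> oc n vv j" if "older vv i j"
    proof -
      have "i \<in> {k \<in> {..<n}. older vv k j}" using assms that by simp
      then have "0 < card {k \<in> {..<n}. older vv k j}" by (auto simp: card_gt_0_iff)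
      then show ?thesis unfolding oc_def by simp
    qed
    ultimately show ?thesis
    proof (cases "older vv i j")
      case True
      then have "card K = oc n vv j - 1" using \<open>card K = _\<close> assms by simp
      then show ?thesis using True o1[OF True] by (simp add: of_nat_diff)
    next
      case False
      then have "card K = oc n vv j" using \<open>card K = _\<close> by simp
      then show ?thesis using False by simp
    qed
  qed
  have sub: "{\<pi> \<in> Perms n. condc n vv \<pi> j i} \<subseteq> {\<pi> \<in> Perms n. top2 X j i \<pi>}"
  proof
    fix \<pi> assume p: "\<pi> \<in> {\<pi> \<in> Perms n. condc n vv \<pi> j i}"
    then have c: "\<pi> j > \<pi> i" "\<And>k. k < n \<Longrightarrow> older vv k j \<and> k \<noteq> i \<Longrightarrow> \<pi> k < \<pi> i"
      unfolding condc_def by auto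
    have "top2 X j i \<pi>" unfolding top2_def X_def K_def
      using c by (auto intro: less_trans)
    then show "\<pi> \<in> {\<pi> \<in> Perms n. top2 X j i \<pi>}" using p by simp
  qed
  have finP: "finite (Perms n)" by (rule finite_permutations) simp
  have c1: "card {\<pi> \<in> Perms n. condc n vv \<pi> j i} \<le> card {\<pi> \<in> Perms n. top2 X j i \<pi>}"
    by (rule card_mono[OF _ sub]) (use finP in simp)
  have c2: "real (card {\<pi> \<in> Perms n. top2 X j i \<pi>}) * (real (card X) * (real (card X) - 1)) \<le> fact n"
    by (rule card_top2_bound[OF X]) (use assms in \<open>auto simp: X_def\<close>)
  have r: "real (card X) = real (oc n vv j) + 2 - of_bool (older vv i j)" using cX cK by simp
  have r1: "real (card X) - 1 = real (oc n vv j) + 1 - of_bool (older vv i j)" using r by simp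
  have c4: "0 < real (card X) * (real (card X) - 1)"
  proof -
    have "2 \<le> real (card X)" using cX by simp
    then show ?thesis by (simp add: mult_pos_pos)
  qed
  have le2: "real (card {\<pi> \<in> Perms n. top2 X j i \<pi>}) \<le> fact n / (real (card X) * (real (card X) - 1))"
    using c2 c4 by (simp add: pos_le_divide_eq)
  have le1: "real (card {\<pi> \<in> Perms n. condc n vv \<pi> j i}) \<le> real (card {\<pi> \<in> Perms n. top2 X j i \<pi>})"
    using c1 by (simp only: of_nat_le_iff)
  have "real (card {\<pi> \<in> Perms n. condc n vv \<pi> j i}) \<le> fact n / (real (card X) * (real (card X) - 1))"
    using le1 le2 by (rule order_trans)
  then show ?thesis unfolding r1 unfolding r .
qed


lemma perj:
  fixes P :: "nat \<Rightarrow> real" and old :: "nat \<Rightarrow> bool" and rk d :: real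
  assumes I: "finite I" and rk1: "1 \<le> rk" and d1: "1 \<le> d" and P0: "\<And>i. i\<in>I \<Longrightarrow> 0 \<le> P i"
    and P1: "\<And>i. i\<in>I \<Longrightarrow> P i \<le> 1" and PS: "(\<Sum>i\<in>I. P i) \<le> 2*d"
    and cO: "real (card {i\<in>I. old i}) \<le> rk"
  shows "(\<Sum>i\<in>I. P i * (1/((rk + 2 - of_bool (old i)) * (rk + 1 - of_bool (old i)))) * (1/(4*(d+1)))) \<le> 1/(2*(rk+1)*(rk+2))"
proof -
  define a where "a = 1/((rk+1)*(rk+2))"
  define b where "b = 2/(rk*(rk+1)*(rk+2))"
  have rkp: "0 < rk" "rk + 1 \<noteq> 0" "rk + 2 \<noteq> 0" "rk \<noteq> 0" using rk1 by auto
  have q: "1/((rk + 2 - of_bool (old i)) * (rk + 1 - of_bool (old i))) = a + of_bool (old i) * b" for i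
  proof (cases "old i")
    case True
    have "1/((rk + 2 - 1) * (rk + 1 - 1)) = 1/((rk+1)*rk)" by (simp add: algebra_simps)
    also have "\<dots> = a + b" unfolding a_def b_def using rkp by (simp add: divide_simps)
    finally show ?thesis using True by simp
  next
    case False
    then show ?thesis unfolding a_def by (simp add: algebra_simps)
  qed
  have a0: "0 \<le> a" "0 \<le> b" unfolding a_def b_def using rkp by auto
  have "(\<Sum>i\<in>I. P i * (1/((rk + 2 - of_bool (old i)) * (rk + 1 - of_bool (old i))))) =
      a * (\<Sum>i\<in>I. P i) + b * (\<Sum>i\<in>I. of_bool (old i) * P i)"
    unfolding q by (simp add: sum.distrib sum_distrib_left algebra_simps)
  moreover have "(\<Sum>i\<in>I. of_bool (old i) * P i) \<le> (\<Sum>i\<in>I. of_bool (old i))"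
    by (rule sum_mono) (use P1 in auto)
  moreover have "(\<Sum>i\<in>I. of_bool (old i) :: real) = real (card {i\<in>I. old i})"
    using I by (simp add: sum_of_bool_eq Collect_conj_eq Int_commute)
  moreover have "a * (\<Sum>i\<in>I. P i) \<le> a * (2 * d)"
    by (rule mult_left_mono[OF PS a0(1)])
  ultimately have "(\<Sum>i\<in>I. P i * (1/((rk + 2 - of_bool (old i)) * (rk + 1 - of_bool (old i))))) \<le> a * (2*d) + b * rk"
    using cO a0 by (smt (verit) mult_left_mono)
  also have "a * (2*d) + b * rk = (2*d+2)/((rk+1)*(rk+2))"
  proof -
    have "b * rk = 2/((rk+1)*(rk+2))" unfolding b_def using rkp by (simp add: divide_simps)
    then show ?thesis unfolding a_def by (simp add: add_divide_distrib)
  qed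
  finally have S: "(\<Sum>i\<in>I. P i * (1/((rk + 2 - of_bool (old i)) * (rk + 1 - of_bool (old i))))) \<le> (2*d+2)/((rk+1)*(rk+2))" .
  have "(\<Sum>i\<in>I. P i * (1/((rk + 2 - of_bool (old i)) * (rk + 1 - of_bool (old i)))) * (1/(4*(d+1)))) =
     (\<Sum>i\<in>I. P i * (1/((rk + 2 - of_bool (old i)) * (rk + 1 - of_bool (old i))))) * (1/(4*(d+1)))"
    by (simp only: sum_distrib_right)
  also have "\<dots> \<le> (2*d+2)/((rk+1)*(rk+2)) * (1/(4*(d+1)))"
    by (rule mult_right_mono[OF S]) (use d1 in simp)
  also have "\<dots> = 1/(2*(rk+1)*(rk+2))"
  proof -
    have p: "d + 1 \<noteq> 0" "rk + 1 \<noteq> 0" "rk + 2 \<noteq> 0" using d1 rk1 by auto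
    have "(2*d+2) = 2 * (d+1)" by simp
    then show ?thesis using p by (simp add: divide_simps) (simp add: algebra_simps)
  qed
  finally show ?thesis .
qed


lemma telescope:
  "(\<Sum>m\<in>{1..<N}. 1/((real m+1)*(real m+2))) = (if N = 0 then 0 else 1/2 - 1/(real N+1))"
proof (induction N)
  case 0 then show ?case by simp
next
  case (Suc N)
  show ?case
  proof (cases "N = 0")
    case True then show ?thesis by simp
  next
    case False
    have eq: "{1..<Suc N} = insert N {1..<N}" using False by auto
    have "(\<Sum>m\<in>{1..<Suc N}. 1/((real m+1)*(real m+2))) = 1/((real N+1)*(real N+2)) + (\<Sum>m\<in>{1..<N}. 1/((real m+1)*(real m+2)))"
      unfolding eq by (subst sum.insert) auto
    also have "(\<Sum>m\<in>{1..<N}. 1/((real m+1)*(real m+2))) = 1/2 - 1/(real N+1)"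
      using Suc.IH False by (simp only: if_False)
    also have "1/((real N+1)*(real N+2)) + (1/2 - 1/(real N+1)) = 1/2 - 1/(real N+2)"
    proof -
      have p: "real N + 1 \<noteq> 0" "real N + 2 \<noteq> 0" by linarith+
      show ?thesis using p by (simp add: divide_simps) (simp add: algebra_simps)
    qed
    also have "real N + 2 = real (Suc N) + 1" by simp
    finally show ?thesis by simp
  qed
qed

lemma oc_props:
  assumes n0: "0 < n"
  shows "\<And>j. j < n \<Longrightarrow> j \<noteq> i0 n vv \<Longrightarrow> 1 \<le> oc n vv j"
    and "\<And>j. j < n \<Longrightarrow> oc n vv j < n"
    and "inj_on (oc n vv) {..<n}"
proof -
  fix j assume j: "j < n" "j \<noteq> i0 n vv"
  have "older vv (i0 n vv) j" using older_total[of "i0 n vv" j vv] i0_props[OF n0] j by auto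
  then have "i0 n vv \<in> {k\<in>{..<n}. older vv k j}" using i0_props[OF n0] by simp
  then have "0 < card {k\<in>{..<n}. older vv k j}" by (auto simp: card_gt_0_iff)
  then show "1 \<le> oc n vv j" unfolding oc_def by simp
next
  fix j assume j: "j < n"
  have "{k\<in>{..<n}. older vv k j} \<subseteq> {..<n} - {j}" by (auto simp: older_irrefl)
  then have "oc n vv j \<le> card ({..<n} - {j})" unfolding oc_def by (intro card_mono) auto
  then show "oc n vv j < n" using j by simp
next
  have lt: "oc n vv j < oc n vv k" if "older vv j k" "j < n" "k < n" for j k
  proof -
    have "{x\<in>{..<n}. older vv x j} \<subset> {x\<in>{..<n}. older vv x k}"
    proof
      show "{x\<in>{..<n}. older vv x j} \<subseteq> {x\<in>{..<n}. older vv x k}" using older_trans that by blast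
      have "j \<in> {x\<in>{..<n}. older vv x k}" "j \<notin> {x\<in>{..<n}. older vv x j}" using that older_irrefl by auto
      then show "{x\<in>{..<n}. older vv x j} \<noteq> {x\<in>{..<n}. older vv x k}" by blast
    qed
    then show ?thesis unfolding oc_def by (intro psubset_card_mono) auto
  qed
  show "inj_on (oc n vv) {..<n}"
  proof (rule inj_onI)
    fix j k assume jk: "j \<in> {..<n}" "k \<in> {..<n}" "oc n vv j = oc n vv k"
    show "j = k"
    proof (rule ccontr)
      assume "j \<noteq> k"
      then have "older vv j k \<or> older vv k j" by (rule older_total)
      then show False using lt[of j k] lt[of k j] jk by auto
    qed
  qed
qed

lemma rank_sum:
  assumes n0: "0 < n"
  shows "(\<Sum>j\<in>{..<n}-{i0 n vv}. 1/(2*(real (oc n vv j)+1)*(real (oc n vv j)+2))) \<le> 1/4"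
proof -
  define f where "f = (\<lambda>m::nat. 1/((real m+1)*(real m+2)))"
  have inj: "inj_on (oc n vv) ({..<n}-{i0 n vv})" using oc_props(3)[OF n0] by (rule inj_on_subset) auto
  have img: "oc n vv ` ({..<n}-{i0 n vv}) \<subseteq> {1..<n}"
  proof (rule image_subsetI)
    fix j assume "j \<in> {..<n}-{i0 n vv}"
    then show "oc n vv j \<in> {1..<n}" using oc_props(1)[OF n0, of j vv] oc_props(2)[OF n0, of j vv] by auto
  qed
  have e1: "(\<Sum>j\<in>{..<n}-{i0 n vv}. 1/(2*(real (oc n vv j)+1)*(real (oc n vv j)+2))) = (1/2) * (\<Sum>j\<in>{..<n}-{i0 n vv}. f (oc n vv j))"
    unfolding f_def sum_distrib_left by (rule sum.cong) simp_all
  have e2: "(\<Sum>j\<in>{..<n}-{i0 n vv}. f (oc n vv j)) = (\<Sum>m\<in>oc n vv ` ({..<n}-{i0 n vv}). f m)"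
    using sum.reindex[OF inj, of f] by simp
  have e3: "(\<Sum>m\<in>oc n vv ` ({..<n}-{i0 n vv}). f m) \<le> (\<Sum>m\<in>{1..<n}. f m)"
    by (rule sum_mono2[OF _ img]) (auto simp: f_def)
  have e4: "(\<Sum>m\<in>{1..<n}. f m) = 1/2 - 1/(real n+1)" unfolding f_def telescope using n0 by simp
  have "0 \<le> 1/(real n+1)" by simp
  then have "(\<Sum>j\<in>{..<n}-{i0 n vv}. f (oc n vv j)) \<le> 1/2" using e2 e3 e4 by linarith
  then show ?thesis unfolding e1 by simp
qed




lemma sumE_bound:
  assumes v: "valid_vals n S v" and s: "s \<in> sprof n S" and j: "j < n"
  shows "(\<Sum>i\<in>{..<n}-{j}. measure lborel (Eset S v s j i)) \<le> 2 * real (sb_degree n S (v j))"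
proof -
  have vpos: "0 < v j s" using v s j unfolding valid_vals_def by auto
  have "(\<Sum>i\<in>{..<n}-{j}. measure lborel (Eset S v s j i)) \<le> (\<Sum>i\<in>{..<n}-{j}. 2 * (v j s - lowest S v i j s) / v j s)"
  proof (rule sum_mono)
    fix i assume i: "i \<in> {..<n}-{j}"
    show "measure lborel (Eset S v s j i) \<le> 2 * (v j s - lowest S v i j s) / v j s"
      unfolding Eset_def
      by (rule meas_event) (use lowest_bounds[OF v s _ j, of i] i vpos in auto)
  qed
  also have "\<dots> \<le> (\<Sum>i<n. 2 * (v j s - lowest S v i j s) / v j s)"
    by (rule sum_mono2) (use lowest_bounds[OF v s _ j] vpos in \<open>auto simp: divide_nonneg_pos\<close>)
  also have "\<dots> = 2 / v j s * (\<Sum>i<n. v j s - lowest S v i j s)"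
    by (simp add: sum_distrib_left)
  also have "\<dots> \<le> 2 / v j s * (real (sb_degree n S (v j)) * v j s)"
    by (rule mult_left_mono[OF sb_sum[OF v j s]]) (use vpos in simp)
  also have "\<dots> = 2 * real (sb_degree n S (v j))" using vpos by simp
  finally show ?thesis .
qed

lemma part_ii:
  assumes n2: "2 \<le> n" and v: "valid_vals n S v" and s: "s \<in> sprof n S"
  shows "(\<Sum>i<n. alloc n S v (\<lambda>j. sb_degree n S (v j)) s i) \<le> 1"
proof -
  define d where "d = (\<lambda>j. sb_degree n S (v j))"
  define vv where "vv = (\<lambda>j. v j s)"
  define u where "u = (\<lambda>j. 1/(4*(real (d j)+1)))"
  define P where "P = (\<lambda>j i. measure lborel (Eset S v s j i))"
  define c where "c = (\<lambda>\<pi> j i. of_bool (j = i0 n vv \<or> condc n vv \<pi> j i) :: real)"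
  define F where "F = (fact n :: real)"
  define Q where "Q = (\<lambda>j i. (\<Sum>\<pi>\<in>Perms n. c \<pi> j i) / F)"
  have n0: "0 < n" using n2 by simp
  have Fpos: "0 < F" unfolding F_def by simp
  have finP: "finite (Perms n)" by (rule finite_permutations) simp
  have cardP: "real (card (Perms n)) = F" unfolding F_def using card_permutations[of "{..<n}" n] by simp
  have "(\<Sum>i<n. alloc n S v d s i) = (\<Sum>i<n. \<Sum>\<pi>\<in>Perms n. measure lborel (Aset n S v s i \<pi>) * (1 / eta n d i) / F)"
    unfolding alloc_def xbid_def Ec_def Aset_def F_def
    by (simp add: sum_divide_distrib sum_distrib_right mult.commute)
  also have "\<dots> = (\<Sum>\<pi>\<in>Perms n. (\<Sum>i<n. measure lborel (Aset n S v s i \<pi>) * (1 / eta n d i)) / F)"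
    by (subst sum.swap) (simp add: sum_divide_distrib)
  also have "\<dots> \<le> (\<Sum>\<pi>\<in>Perms n. (1/8 + (\<Sum>j<n. \<Sum>i\<in>{..<n}-{j}. P j i * (c \<pi> j i * u j))) / F)"
  proof (rule sum_mono)
    fix \<pi> assume "\<pi> \<in> Perms n"
    then have "(\<Sum>i<n. measure lborel (Aset n S v s i \<pi>) * (1 / eta n d i)) \<le> 1/8 + (\<Sum>j<n. \<Sum>i\<in>{..<n}-{j}. P j i * (c \<pi> j i * u j))"
      using per_pi[OF n2 v s, of \<pi>] unfolding d_def vv_def P_def c_def u_def by simp
    then show "(\<Sum>i<n. measure lborel (Aset n S v s i \<pi>) * (1 / eta n d i)) / F \<le> (1/8 + (\<Sum>j<n. \<Sum>i\<in>{..<n}-{j}. P j i * (c \<pi> j i * u j))) / F"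
      using Fpos by (simp add: divide_right_mono)
  qed
  also have "\<dots> = 1/8 + (\<Sum>j<n. \<Sum>i\<in>{..<n}-{j}. P j i * u j * Q j i)"
  proof -
    have "(\<Sum>\<pi>\<in>Perms n. (1/8 + (\<Sum>j<n. \<Sum>i\<in>{..<n}-{j}. P j i * (c \<pi> j i * u j))) / F) =
        real (card (Perms n)) * (1/8) / F + (\<Sum>\<pi>\<in>Perms n. \<Sum>j<n. \<Sum>i\<in>{..<n}-{j}. P j i * (c \<pi> j i * u j)) / F"
      by (simp add: sum.distrib sum_divide_distrib add_divide_distrib)
    also have "(\<Sum>\<pi>\<in>Perms n. \<Sum>j<n. \<Sum>i\<in>{..<n}-{j}. P j i * (c \<pi> j i * u j)) =
        (\<Sum>j<n. \<Sum>i\<in>{..<n}-{j}. \<Sum>\<pi>\<in>Perms n. P j i * (c \<pi> j i * u j))"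
      by (subst sum.swap) (simp add: sum.swap[of _ "Perms n"])
    also have "\<dots> = (\<Sum>j<n. \<Sum>i\<in>{..<n}-{j}. P j i * u j * (\<Sum>\<pi>\<in>Perms n. c \<pi> j i))"
      by (simp add: sum_distrib_left mult.commute mult.left_commute)
    finally have X: "(\<Sum>\<pi>\<in>Perms n. (1/8 + (\<Sum>j<n. \<Sum>i\<in>{..<n}-{j}. P j i * (c \<pi> j i * u j))) / F) =
        real (card (Perms n)) * (1/8) / F + (\<Sum>j<n. \<Sum>i\<in>{..<n}-{j}. P j i * u j * (\<Sum>\<pi>\<in>Perms n. c \<pi> j i)) / F" .
    have Y1: "(\<Sum>j<n. \<Sum>i\<in>{..<n}-{j}. P j i * u j * (\<Sum>\<pi>\<in>Perms n. c \<pi> j i)) / F =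
        (\<Sum>j<n. \<Sum>i\<in>{..<n}-{j}. P j i * u j * (\<Sum>\<pi>\<in>Perms n. c \<pi> j i) / F)"
      by (simp only: sum_divide_distrib)
    have Y2: "(\<Sum>j<n. \<Sum>i\<in>{..<n}-{j}. P j i * u j * (\<Sum>\<pi>\<in>Perms n. c \<pi> j i) / F) =
        (\<Sum>j<n. \<Sum>i\<in>{..<n}-{j}. P j i * u j * Q j i)"
      unfolding Q_def by (simp only: times_divide_eq_right)
    have Z: "real (card (Perms n)) * (1/8) / F = 1/8" using cardP Fpos by simp
    show ?thesis unfolding X Y1 Y2 Z ..
  qed
  also have "\<dots> \<le> 1/8 + (1/2 + 1/4)"
  proof -
    define T where "T = (\<lambda>j. \<Sum>i\<in>{..<n}-{j}. P j i * u j * Q j i)"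
    have P01: "0 \<le> P j i" "P j i \<le> 1" if "i < n" "j < n" for i j
    proof -
      show "0 \<le> P j i" unfolding P_def by simp
      have "Eset S v s j i \<in> sets lborel" unfolding Eset_def
        by (rule sets_fr_less) (use lowest_bounds[OF v s that] v s that in \<open>auto simp: valid_vals_def less_imp_le\<close>)
      then show "P j i \<le> 1" unfolding P_def by (intro meas_sub01) (auto simp: Eset_def)
    qed
    have d1: "1 \<le> d j" if "j < n" for j using sb_degree_props(1)[OF v that] unfolding d_def .
    have sumP: "(\<Sum>i\<in>{..<n}-{j}. P j i) \<le> 2 * real (d j)" if "j < n" for j
      using sumE_bound[OF v s that] unfolding P_def d_def .
    have u0: "0 \<le> u j" for j unfolding u_def by simp
    have T0: "T (i0 n vv) \<le> 1/2"
    proof -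
      have "T (i0 n vv) = (\<Sum>i\<in>{..<n}-{i0 n vv}. P (i0 n vv) i) * u (i0 n vv)"
        unfolding T_def Q_def c_def using cardP Fpos by (simp add: sum_distrib_right)
      also have "\<dots> \<le> 2 * real (d (i0 n vv)) * u (i0 n vv)"
        by (rule mult_right_mono[OF sumP[OF i0_props(1)[OF n0]] u0])
      also have "\<dots> \<le> 1/2" unfolding u_def by (simp add: field_simps)
      finally show ?thesis .
    qed
    have Tj: "T j \<le> 1/(2*(real (oc n vv j)+1)*(real (oc n vv j)+2))" if j: "j < n" "j \<noteq> i0 n vv" for j
    proof -
      define q where "q = (\<lambda>i. 1/((real (oc n vv j) + 2 - of_bool (older vv i j)) * (real (oc n vv j) + 1 - of_bool (older vv i j))))"
      have cq: "Q j i \<le> q i" if i: "i \<in> {..<n}-{j}" for i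
      proof -
        have "(\<Sum>\<pi>\<in>Perms n. c \<pi> j i) = real (card {\<pi> \<in> Perms n. condc n vv \<pi> j i})"
          unfolding c_def using j finP by (simp add: sum_of_bool_eq Collect_conj_eq Int_commute)
        also have "\<dots> \<le> fact n / ((real (oc n vv j) + 2 - of_bool (older vv i j)) * (real (oc n vv j) + 1 - of_bool (older vv i j)))"
          by (rule count_condc) (use i j in auto)
        finally have le: "(\<Sum>\<pi>\<in>Perms n. c \<pi> j i) \<le> F / ((real (oc n vv j) + 2 - of_bool (older vv i j)) * (real (oc n vv j) + 1 - of_bool (older vv i j)))"
          unfolding F_def .
        have "Q j i \<le> F / ((real (oc n vv j) + 2 - of_bool (older vv i j)) * (real (oc n vv j) + 1 - of_bool (older vv i j))) / F"
          unfolding Q_def by (rule divide_right_mono[OF le]) (use Fpos in simp)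
        also have "\<dots> = q i" unfolding q_def using Fpos by simp
        finally show ?thesis .
      qed
      have "T j \<le> (\<Sum>i\<in>{..<n}-{j}. P j i * q i * (1/(4*(real (d j)+1))))"
        unfolding T_def
      proof (rule sum_mono)
        fix i assume i: "i \<in> {..<n}-{j}"
        have "P j i * u j * Q j i \<le> P j i * u j * q i"
          by (rule mult_left_mono[OF cq[OF i]]) (use P01 i j u0 in auto)
        then show "P j i * u j * Q j i \<le> P j i * q i * (1/(4*(real (d j)+1)))"
          unfolding u_def by (simp add: mult.commute mult.left_commute)
      qed
      also have "\<dots> \<le> 1/(2*(real (oc n vv j)+1)*(real (oc n vv j)+2))"
        unfolding q_def
      proof (rule perj)
        show "finite ({..<n}-{j})" by simp
        show "1 \<le> real (oc n vv j)" using oc_props(1)[OF n0 j] by simp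
        show "1 \<le> real (d j)" using d1 j by simp
        show "0 \<le> P j i" "P j i \<le> 1" if "i \<in> {..<n}-{j}" for i using P01 that j by auto
        show "(\<Sum>i\<in>{..<n}-{j}. P j i) \<le> 2 * real (d j)" using sumP j by simp
        have "{i \<in> {..<n}-{j}. older vv i j} \<subseteq> {k\<in>{..<n}. older vv k j}" by auto
        then have "card {i \<in> {..<n}-{j}. older vv i j} \<le> oc n vv j" unfolding oc_def by (intro card_mono) auto
        then show "real (card {i \<in> {..<n}-{j}. older vv i j}) \<le> real (oc n vv j)" by simp
      qed
      finally show ?thesis .
    qed
    have "(\<Sum>j<n. T j) = T (i0 n vv) + (\<Sum>j\<in>{..<n}-{i0 n vv}. T j)"
      using i0_props(1)[OF n0] by (simp add: sum.remove)
    also have "\<dots> \<le> 1/2 + (\<Sum>j\<in>{..<n}-{i0 n vv}. 1/(2*(real (oc n vv j)+1)*(real (oc n vv j)+2)))"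
      using T0 Tj by (intro add_mono sum_mono) auto
    also have "\<dots> \<le> 1/2 + 1/4" using rank_sum[OF n0, of vv] by simp
    finally show ?thesis unfolding T_def by simp
  qed
  finally show ?thesis unfolding d_def by simp
qed




lemma exists_winner:
  fixes g :: "nat \<Rightarrow> real" and h :: "nat \<Rightarrow> nat \<Rightarrow> real" and \<pi> :: "nat \<Rightarrow> nat"
  assumes n0: "0 < n" and hle: "\<And>j i. j < n \<Longrightarrow> i < n \<Longrightarrow> h j i \<le> g j"
    and inj: "inj_on \<pi> {..<n}"
  shows "\<exists>w<n. (\<forall>k<n. g k \<le> g w) \<and> (\<forall>j<n. j \<noteq> w \<longrightarrow> g w > h j w \<or> (g w = h j w \<and> \<pi> w > \<pi> j))"
proof -
  define M where "M = Max (g ` {..<n})"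
  define W where "W = {k\<in>{..<n}. g k = M}"
  have "M \<in> g ` {..<n}" unfolding M_def using n0 by (intro Max_in) auto
  then have Wne: "W \<noteq> {}" unfolding W_def by auto
  have finW: "finite W" unfolding W_def by simp
  have "Max (\<pi> ` W) \<in> \<pi> ` W" using Wne finW by (intro Max_in) auto
  then obtain w where w: "w \<in> W" "\<pi> w = Max (\<pi> ` W)" by auto
  have gM: "g k \<le> M" if "k < n" for k unfolding M_def using that by (intro Max_ge) auto
  have wn: "w < n" "g w = M" using w unfolding W_def by auto
  show ?thesis
  proof (intro exI[of _ w] conjI allI impI)
    show "w < n" by (rule wn(1))
    show "g k \<le> g w" if "k < n" for k using gM[OF that] wn by simp
    fix j assume j: "j < n" "j \<noteq> w"
    show "g w > h j w \<or> (g w = h j w \<and> \<pi> w > \<pi> j)"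
    proof (cases "h j w < g w")
      case True then show ?thesis by simp
    next
      case False
      have "h j w \<le> g j" using hle j wn by simp
      then have eq: "h j w = g w" "g j = M" using False gM[OF j(1)] wn by auto
      then have "j \<in> W" unfolding W_def using j by simp
      then have "\<pi> j \<le> \<pi> w" unfolding w(2) using finW by (intro Max_ge) auto
      moreover have "\<pi> j \<noteq> \<pi> w" using inj j wn unfolding inj_on_def by auto
      ultimately show ?thesis using eq by simp
    qed
  qed
qed

lemma per_pi_lower:
  assumes n2: "2 \<le> n" and v: "valid_vals n S v" and s: "s \<in> sprof n S" and \<pi>: "\<pi> permutes {..<n}"
  shows "v (i0 n (\<lambda>j. v j s)) s / (2 * ln 2) \<le> (\<Sum>i<n. measure lborel (Aset n S v s i \<pi>) * v i s)"
proof -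
  define vv where "vv = (\<lambda>j. v j s)"
  define k0 where "k0 = i0 n vv"
  define V where "V = vv k0"
  have n0: "0 < n" using n2 by simp
  have k0: "k0 < n" unfolding k0_def using i0_props(1)[OF n0] .
  have vpos: "0 < vv j" if "j < n" for j using v s that unfolding valid_vals_def vv_def by auto
  have Vpos: "0 < V" unfolding V_def using vpos[OF k0] .
  have vmax: "vv k \<le> V" if "k < n" for k
    using i0_props(2)[OF n0 that, of vv] unfolding V_def k0_def older_def by auto
  have lowb: "0 \<le> lowest S v i j s" "lowest S v i j s \<le> vv j" if "i < n" "j < n" for i j
    using lowest_bounds[OF v s that] unfolding vv_def by auto
  have mA: "Aset n S v s i \<pi> \<in> sets lborel" "Aset n S v s i \<pi> \<subseteq> {0..<1}" if "i < n" for i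
  proof -
    show "Aset n S v s i \<pi> \<in> sets lborel" unfolding Aset_def
      by (rule sets_A) (use vpos[OF that] lowb that in \<open>auto simp: vv_def less_imp_le\<close>)
    show "Aset n S v s i \<pi> \<subseteq> {0..<1}" unfolding Aset_def by auto
  qed
  have intL: "integrable lborel (\<lambda>r. \<Sum>i<n. indicator (Aset n S v s i \<pi>) r * vv i)"
    and eqL: "(integral\<^sup>L lborel (\<lambda>r. \<Sum>i<n. indicator (Aset n S v s i \<pi>) r * vv i)) =
       (\<Sum>i<n. measure lborel (Aset n S v s i \<pi>) * vv i)"
    using integ_sum_ind[of "{..<n}" "\<lambda>i. Aset n S v s i \<pi>" "\<lambda>i. vv i"] mA by auto
  define g where "g = (\<lambda>r. indicator {0..<1::real} r * fr r V :: real)"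
  have gmeas: "g \<in> borel_measurable lborel" unfolding g_def using Vpos
    by (intro borel_measurable_times) (auto simp: less_imp_le measurable_lborel1)
  have intg: "integrable lborel g"
  proof (rule Bochner_Integration.integrable_bound)
    show "integrable lborel (\<lambda>r. indicator {0..<1::real} r * V)"
      by (rule integrable_mult_left) (rule int01, auto)
    show "g \<in> borel_measurable lborel" by (rule gmeas)
    show "AE x in lborel. norm (g x) \<le> norm (indicator {0..<1::real} x * V)"
      unfolding g_def using Vpos fr_ge0[of V] fr_le[of V]
      by (intro AE_I2) (auto simp: indicator_def less_imp_le)
  qed
  have g0: "0 \<le> g r" for r unfolding g_def using Vpos fr_ge0[of V r] by simp
  have "ennreal (V / (2 * ln 2)) \<le> (\<integral>\<^sup>+ r. ennreal (g r) \<partial>lborel)"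
    unfolding g_def by (rule fr_integral_lower[OF Vpos])
  also have "\<dots> = ennreal (integral\<^sup>L lborel g)"
    by (rule nn_integral_eq_integral[OF intg]) (use g0 in auto)
  finally have low: "V / (2 * ln 2) \<le> integral\<^sup>L lborel g"
    using Bochner_Integration.integral_nonneg[of lborel g] g0 by (simp add: ennreal_le_iff)
  have pw: "g r \<le> (\<Sum>i<n. indicator (Aset n S v s i \<pi>) r * vv i)" for r
  proof (cases "r \<in> {0..<1}")
    case False
    then show ?thesis unfolding g_def using vpos by (auto intro!: sum_nonneg simp: less_imp_le)
  next
    case True
    obtain w where w: "w < n" "\<forall>k<n. fr r (vv k) \<le> fr r (vv w)"
      "\<forall>j<n. j \<noteq> w \<longrightarrow> fr r (vv w) > fr r (lowest S v w j s) \<or> (fr r (vv w) = fr r (lowest S v w j s) \<and> \<pi> w > \<pi> j)"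
      using exists_winner[OF n0, of "\<lambda>j i. fr r (lowest S v i j s)" "\<lambda>k. fr r (vv k)" \<pi>]
        fr_mono lowb permutes_inj_on[OF \<pi>] by blast
    have "r \<in> Aset n S v s w \<pi>" unfolding Aset_def cbid_def gt_pi_def using True w(3) by (auto simp: vv_def)
    then have "vv w = indicator (Aset n S v s w \<pi>) r * vv w" by simp
    also have "\<dots> \<le> (\<Sum>i<n. indicator (Aset n S v s i \<pi>) r * vv i)"
    proof (rule member_le_sum)
      fix x assume "x \<in> {..<n} - {w}"
      then have "0 \<le> vv x" using vpos[of x] by simp
      then show "0 \<le> indicator (Aset n S v s x \<pi>) r * vv x" by simp
    qed (use w(1) in simp_all)
    finally have "vv w \<le> (\<Sum>i<n. indicator (Aset n S v s i \<pi>) r * vv i)" .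
    moreover have "fr r (vv w) \<le> vv w" using fr_le vpos[OF w(1)] by simp
    moreover have "fr r V \<le> fr r (vv w)" using w(2) k0 unfolding V_def by simp
    ultimately show ?thesis unfolding g_def using True by simp
  qed
  have "integral\<^sup>L lborel g \<le> (integral\<^sup>L lborel (\<lambda>r. \<Sum>i<n. indicator (Aset n S v s i \<pi>) r * vv i))"
    by (rule Bochner_Integration.integral_mono[OF intg intL]) (use pw in auto)
  then show ?thesis using low eqL unfolding V_def k0_def vv_def by simp
qed




lemma part_iii:
  assumes n2: "2 \<le> n" and v: "valid_vals n S v" and s: "s \<in> sprof n S"
  shows "Max {v i s | i. i < n} / (8 * (real (Max {sb_degree n S (v j) | j. j < n}) + 1) * ln 2)
           \<le> (\<Sum>i<n. alloc n S v (\<lambda>j. sb_degree n S (v j)) s i * v i s)"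
proof -
  define d where "d = (\<lambda>j. sb_degree n S (v j))"
  define vv where "vv = (\<lambda>j. v j s)"
  define k0 where "k0 = i0 n vv"
  define V where "V = vv k0"
  define Dm where "Dm = real (Max {d j | j. j < n})"
  define F where "F = (fact n :: real)"
  have n0: "0 < n" using n2 by simp
  have k0: "k0 < n" unfolding k0_def using i0_props(1)[OF n0] .
  have vpos: "0 < vv j" if "j < n" for j using v s that unfolding valid_vals_def vv_def by auto
  have vmax: "vv k \<le> V" if "k < n" for k
    using i0_props(2)[OF n0 that, of vv] unfolding V_def k0_def older_def by auto
  have MaxV: "Max {v i s | i. i < n} = V"
  proof (rule Max_eqI)
    show "finite {v i s | i. i < n}" by simp
    show "y \<le> V" if "y \<in> {v i s | i. i < n}" for y using that vmax unfolding vv_def by auto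
    show "V \<in> {v i s | i. i < n}" using k0 unfolding V_def vv_def by auto
  qed
  have Fpos: "0 < F" unfolding F_def by simp
  have Dm0: "0 \<le> Dm" unfolding Dm_def by simp
  have eta_le': "eta n d i \<le> 4 * (Dm + 1)" if "i < n" for i
    using eta_le[OF that n2, of d] unfolding Dm_def .
  have Apos: "0 \<le> (\<Sum>\<pi>\<in>Perms n. measure lborel (Aset n S v s i \<pi>))" for i by (simp add: sum_nonneg)
  have "(\<Sum>i<n. (\<Sum>\<pi>\<in>Perms n. measure lborel (Aset n S v s i \<pi>)) * vv i / (F * (4 * (Dm + 1))))
      \<le> (\<Sum>i<n. alloc n S v d s i * v i s)"
  proof (rule sum_mono)
    fix i assume i: "i \<in> {..<n}"
    have e: "alloc n S v d s i * v i s = (\<Sum>\<pi>\<in>Perms n. measure lborel (Aset n S v s i \<pi>)) * vv i / (F * eta n d i)"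
      unfolding alloc_def xbid_def Ec_def Aset_def F_def vv_def by simp
    show "(\<Sum>\<pi>\<in>Perms n. measure lborel (Aset n S v s i \<pi>)) * vv i / (F * (4 * (Dm + 1))) \<le> alloc n S v d s i * v i s"
      unfolding e
      by (rule divide_left_mono) (use Apos[of i] vpos[of i] i Fpos eta_pos[of n d i] eta_le'[of i] in \<open>auto intro!: mult_left_mono mult_pos_pos\<close>)
  qed
  moreover have "(\<Sum>i<n. (\<Sum>\<pi>\<in>Perms n. measure lborel (Aset n S v s i \<pi>)) * vv i / (F * (4 * (Dm + 1))))
      = (\<Sum>\<pi>\<in>Perms n. \<Sum>i<n. measure lborel (Aset n S v s i \<pi>) * v i s) / (F * (4 * (Dm + 1)))"
    unfolding vv_def by (simp add: sum_divide_distrib sum_distrib_right sum.swap[of _ "{..<n}"])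
  moreover have "(\<Sum>\<pi>\<in>Perms n. \<Sum>i<n. measure lborel (Aset n S v s i \<pi>) * v i s) \<ge> (\<Sum>\<pi>\<in>Perms n. V / (2 * ln 2))"
    using per_pi_lower[OF n2 v s] unfolding V_def k0_def vv_def by (intro sum_mono) auto
  moreover have "(\<Sum>\<pi>\<in>Perms n. V / (2 * ln 2)) = F * (V / (2 * ln 2))"
    unfolding F_def using card_permutations[of "{..<n}" n] by simp
  ultimately have "F * (V / (2 * ln 2)) / (F * (4 * (Dm + 1))) \<le> (\<Sum>i<n. alloc n S v d s i * v i s)"
    using Fpos Dm0 by (smt (verit, best) divide_right_mono mult_pos_pos)
  moreover have "F * (V / (2 * ln 2)) / (F * (4 * (Dm + 1))) = V / (8 * (Dm + 1) * ln 2)"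
  proof -
    have "F * (V / (2 * ln 2)) / (F * (4 * (Dm + 1))) = (V / (2 * ln 2)) / (4 * (Dm + 1))"
      using Fpos by (simp only: mult_divide_mult_cancel_left_if) simp
    also have "\<dots> = V / ((2 * ln 2) * (4 * (Dm + 1)))" by (simp only: divide_divide_eq_left)
    also have "(2 * ln 2) * (4 * (Dm + 1)) = 8 * (Dm + 1) * ln (2::real)" by (simp add: algebra_simps)
    finally show ?thesis .
  qed
  ultimately show ?thesis unfolding MaxV Dm_def d_def by simp
qed

lemma lowest_cong:
  assumes "s \<in> sprof n S" "s' \<in> sprof n S" "i < n" "\<And>j. j < n \<Longrightarrow> j \<noteq> i \<Longrightarrow> s j = s' j" "v j = v' j"
  shows "lowest S v i j s = lowest S v' i j s'"
proof -
  have "s(i := x) = s'(i := x)" for x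
  proof
    fix k show "(s(i := x)) k = (s'(i := x)) k"
    proof (cases "k < n")
      case True then show ?thesis using assms(4)[of k] by auto
    next
      case False
      then have "s k = undefined" "s' k = undefined" using assms(1,2) unfolding sprof_def
        by (auto intro: PiE_arb)
      then show ?thesis by simp
    qed
  qed
  then show ?thesis unfolding lowest_def using assms(5) by simp
qed

lemma part_ia:
  assumes "i < n" "valid_vals n S v" "valid_vals n S v'" "s \<in> sprof n S" "s' \<in> sprof n S"
    "\<forall>j<n. j \<noteq> i \<longrightarrow> s j = s' j \<and> v j = v' j \<and> d j = d' j" "v i s = v' i s'"
  shows "alloc n S v d s i = alloc n S v' d' s' i"
proof -
  have low: "lowest S v i j s = lowest S v' i j s'" if "j < n" "j \<noteq> i" for j
    by (rule lowest_cong) (use assms that in auto)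
  have cb: "cbid n S v s i t r \<pi> = cbid n S v' s' i t r \<pi>" for t r \<pi>
    unfolding cbid_def using low by simp
  have et: "eta n d i = eta n d' i"
  proof -
    have "{d j | j. j < n \<and> j \<noteq> i} = {d' j | j. j < n \<and> j \<noteq> i}" using assms(6) by force
    then show ?thesis unfolding eta_def by simp
  qed
  show ?thesis unfolding alloc_def xbid_def Ec_def cb et assms(7) ..
qed

lemma xbid_dev:
  assumes "i < n"
  shows "xbid n S (v(i := vi')) (D(i := di')) (s(i := si')) i = xbid n S v D s i"
proof -
  have low: "lowest S (v(i := vi')) i j (s(i := si')) = lowest S v i j s" if "j \<noteq> i" for j
    unfolding lowest_def using that by simp
  have cb: "cbid n S (v(i := vi')) (s(i := si')) i t r \<pi> = cbid n S v s i t r \<pi>" for t r \<pi>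
    unfolding cbid_def using low by simp
  have et: "eta n (D(i := di')) i = eta n D i"
  proof -
    have "{(D(i := di')) j | j. j < n \<and> j \<noteq> i} = {D j | j. j < n \<and> j \<noteq> i}" by force
    then show ?thesis unfolding eta_def by simp
  qed
  show ?thesis unfolding xbid_def Ec_def cb et ..
qed

lemma part_ic:
  assumes v: "valid_vals n S v" and i: "i < n" and s: "s \<in> sprof n S"
  defines "D \<equiv> \<lambda>j. sb_degree n S (v j)"
  shows "0 \<le> alloc n S v D s i * v i s - pay n S v D s i"
    and "\<And>si' vi' di'. si' \<in> S i \<Longrightarrow> (\<forall>u\<in>sprof n S. 0 < vi' u) \<Longrightarrow>
          alloc n S (v(i := vi')) (D(i := di')) (s(i := si')) i * v i s
               - pay n S (v(i := vi')) (D(i := di')) (s(i := si')) i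
             \<le> alloc n S v D s i * v i s - pay n S v D s i"
proof -
  define x where "x = xbid n S v D s i"
  have mono: "mono_on {0..} x" unfolding x_def using xbid_mono[OF v s i] .
  have nn: "\<And>t. 0 \<le> x t" unfolding x_def by (rule xbid_nonneg)
  have u: "0 \<le> v i s" using v s i unfolding valid_vals_def by (auto intro: less_imp_le)
  have eq0: "alloc n S v D s i * v i s - pay n S v D s i = x (v i s) * v i s - (x (v i s) * v i s - integral {0..v i s} x)"
    unfolding alloc_def pay_def x_def ..
  show "0 \<le> alloc n S v D s i * v i s - pay n S v D s i"
    unfolding eq0 by (rule myerson(2)[OF mono nn u u])
  fix si' :: real and vi' :: "(nat \<Rightarrow> real) \<Rightarrow> real" and di' :: nat assume si': "si' \<in> S i" and vi': "\<forall>u\<in>sprof n S. 0 < vi' u"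
  define b where "b = vi' (s(i := si'))"
  have "0 < vi' (s(i := si'))" using vi' sprof_upd[OF s i si'] by blast
  then have b: "0 \<le> b" unfolding b_def by (rule less_imp_le)
  have xd: "xbid n S (v(i := vi')) (D(i := di')) (s(i := si')) i = x"
    unfolding x_def by (rule xbid_dev[OF i])
  have eq1: "alloc n S (v(i := vi')) (D(i := di')) (s(i := si')) i * v i s
               - pay n S (v(i := vi')) (D(i := di')) (s(i := si')) i = x b * v i s - (x b * b - integral {0..b} x)"
    unfolding alloc_def pay_def xd b_def by simp
  show "alloc n S (v(i := vi')) (D(i := di')) (s(i := si')) i * v i s
               - pay n S (v(i := vi')) (D(i := di')) (s(i := si')) i
             \<le> alloc n S v D s i * v i s - pay n S v D s i"
    unfolding eq1 eq0 by (rule myerson(1)[OF mono nn u b])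
qed





theorem mainTheorem14:
  fixes n :: nat and S :: "nat \<Rightarrow> real set"
  assumes n2: "n \<ge> 2"
  shows
    \<comment> \<open>(i-a) x_i depends on bidder i's report only through v_i(s)\<close>
    "(\<forall>i<n. \<forall>v v' d d' s s'.
        valid_vals n S v \<and> valid_vals n S v' \<and> s \<in> sprof n S \<and> s' \<in> sprof n S \<and>
        (\<forall>j<n. j \<noteq> i \<longrightarrow> s j = s' j \<and> v j = v' j \<and> d j = d' j) \<and> v i s = v' i s'
        \<longrightarrow> alloc n S v d s i = alloc n S v' d' s' i)
   \<and> \<comment> \<open>(i-b) non-decreasing in the bid\<close>
     (\<forall>i<n. \<forall>v d. \<forall>s\<in>sprof n S. valid_vals n S v \<longrightarrow> mono_on {0..} (xbid n S v d s i))
   \<and> \<comment> \<open>(i-c) EPIC-IR\<close>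
     (\<forall>v. valid_vals n S v \<longrightarrow>
       (let D = (\<lambda>j. sb_degree n S (v j)) in
        \<forall>i<n. \<forall>s\<in>sprof n S.
          0 \<le> alloc n S v D s i * v i s - pay n S v D s i \<and>
          (\<forall>si'\<in>S i. \<forall>vi' di'. (\<forall>u\<in>sprof n S. 0 < vi' u) \<longrightarrow>
             alloc n S (v(i := vi')) (D(i := di')) (s(i := si')) i * v i s
               - pay n S (v(i := vi')) (D(i := di')) (s(i := si')) i
             \<le> alloc n S v D s i * v i s - pay n S v D s i)))
   \<and> \<comment> \<open>(ii) feasibility\<close>
     (\<forall>v. valid_vals n S v \<longrightarrow> (\<forall>s\<in>sprof n S.
        (\<Sum>i<n. alloc n S v (\<lambda>j. sb_degree n S (v j)) s i) \<le> 1))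
   \<and> \<comment> \<open>(iii) approximation\<close>
     (\<forall>v. valid_vals n S v \<longrightarrow> (\<forall>s\<in>sprof n S.
        (let D = (\<lambda>j. sb_degree n S (v j)) in
         Max {v i s | i. i < n} / (8 * (real (Max {D j | j. j < n}) + 1) * ln 2)
           \<le> (\<Sum>i<n. alloc n S v D s i * v i s))))"
proof (intro conjI)
  show "\<forall>i<n. \<forall>v v' d d' s s'.
        valid_vals n S v \<and> valid_vals n S v' \<and> s \<in> sprof n S \<and> s' \<in> sprof n S \<and>
        (\<forall>j<n. j \<noteq> i \<longrightarrow> s j = s' j \<and> v j = v' j \<and> d j = d' j) \<and> v i s = v' i s'
        \<longrightarrow> alloc n S v d s i = alloc n S v' d' s' i"
    using part_ia by blast
  show "\<forall>i<n. \<forall>v d. \<forall>s\<in>sprof n S. valid_vals n S v \<longrightarrow> mono_on {0..} (xbid n S v d s i)"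
    using xbid_mono by blast
  show "\<forall>v. valid_vals n S v \<longrightarrow>
       (let D = (\<lambda>j. sb_degree n S (v j)) in
        \<forall>i<n. \<forall>s\<in>sprof n S.
          0 \<le> alloc n S v D s i * v i s - pay n S v D s i \<and>
          (\<forall>si'\<in>S i. \<forall>vi' di'. (\<forall>u\<in>sprof n S. 0 < vi' u) \<longrightarrow>
             alloc n S (v(i := vi')) (D(i := di')) (s(i := si')) i * v i s
               - pay n S (v(i := vi')) (D(i := di')) (s(i := si')) i
             \<le> alloc n S v D s i * v i s - pay n S v D s i))"
    unfolding Let_def using part_ic by blast
  show "\<forall>v. valid_vals n S v \<longrightarrow> (\<forall>s\<in>sprof n S.
        (\<Sum>i<n. alloc n S v (\<lambda>j. sb_degree n S (v j)) s i) \<le> 1)"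
    using part_ii[OF n2] by blast
  show "\<forall>v. valid_vals n S v \<longrightarrow> (\<forall>s\<in>sprof n S.
        (let D = (\<lambda>j. sb_degree n S (v j)) in
         Max {v i s | i. i < n} / (8 * (real (Max {D j | j. j < n}) + 1) * ln 2)
           \<le> (\<Sum>i<n. alloc n S v D s i * v i s)))"
    unfolding Let_def using part_iii[OF n2] by blast
qed



end
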